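(* Let $A\in\mathcal{C}^{n\times n}$ be diagonalizable with eigenvalues $\nu_1,\dots,\nu_n\in\mathcal{R}$ (with multiplicity) that are at most finite and satisfy $$1=\nu_1[0]>|\nu_2[0]|\ge\dots\ge|\nu_n[0]|.$$ Let $\mathbf x\in\mathcal{C}^n$ be written as $\mathbf x=\mathbf w_1+\dots+\mathbf w_n$ with $A\mathbf w_j=\nu_j\mathbf w_j$, and assume (i) all $\mathbf w_j$ have at most finite entries, (ii) $\mathbf w_1[0]\neq\mathbf 0$, and (iii) there is a unique index $i_0$ with $|\mathbf w_1^{i_0}[0]|=\max_i|\mathbf w_1^i[0]|$. Then for $\mathbf x_k:=A^k\mathbf x$, $$\frac{\mathbf x_k}{\|\mathbf x_k\|_{\max}}\xrightarrow{wk}\frac{\mathbf w_1}{\|\mathbf w_1\|_{\max}}.$$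
   Context: The Levi-Civita field $\mathcal{R}$ (resp. $\mathcal{C}$) is the set of functions $a:\mathbb Q\to\mathbb R$ (resp. $\mathbb C$) with left-finite support (for every $r\in\mathbb Q$ only finitely many $q<r$ with $a(q)\ne0$), written $a[q]:=a(q)$; addition is pointwise, multiplication is $(ab)[q]=\sum_{q_1+q_2=q}a[q_1]b[q_2]$; $\mathcal{R}$ is a real closed ordered field ($a\succ b$ iff $(a-b)[\lambda(a-b)]>0$) and $\mathcal{C}=\mathcal{R}(i)$ is algebraically closed. $\lambda(a)=\min\{q:a[q]\ne0\}$ ($\lambda(0)=+\infty$); $a$ is at most finite if $\lambda(a)\ge0$. Absolute value: on $\mathcal{R}$, $|a|=a$ if $a\succeq0$ and $-a$ otherwise; on $\mathcal{C}$, $|a+ib|=\sqrt{a^2+b^2}$ for $a,b\in\mathcal{R}$. For $r\in\mathbb Q$, $\|a\|_r:=\sup_{q\le r}|a[q]|\in\mathbb R$. Weak convergence $a_n\xrightarrow{wk}a$: for every real $r>0$ there is $N_0$ with $\|a_n-a\|_{1/r}<r$ for all $n>N_0$. For vectors, weak convergence is coordinatewise, $\mathbf x[0]:=(\mathbf x^1[0],\dots,\mathbf x^n[0])\in\mathbb C^n$, and $\|\mathbf x\|_{\max}=\max_i|\mathbf x^i|$ (maximum w.r.t. the order of $\mathcal{R}$). *)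

theory Defs
  imports Complex_Main
begin

text \<open>An element of R (resp. C) is represented by its coefficient
function rat => real (resp. rat => complex); membership in the field is the predicate
lc_left_finite.\<close>

definition lc_left_finite :: "(rat \<Rightarrow> 'a::zero) \<Rightarrow> bool" where
  "lc_left_finite a \<longleftrightarrow> (\<forall>r. finite {q. q < r \<and> a q \<noteq> 0})"

definition lc_add :: "(rat \<Rightarrow> 'a::plus) \<Rightarrow> (rat \<Rightarrow> 'a) \<Rightarrow> rat \<Rightarrow> 'a" where
  "lc_add a b = (\<lambda>q. a q + b q)"

definition lc_mult :: "(rat \<Rightarrow> 'a::comm_ring_1) \<Rightarrow> (rat \<Rightarrow> 'a) \<Rightarrow> rat \<Rightarrow> 'a" where
  "lc_mult a b = (\<lambda>q. \<Sum>q1\<in>{q1. a q1 \<noteq> 0 \<and> b (q - q1) \<noteq> 0}. a q1 * b (q - q1))"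

definition lc_one :: "rat \<Rightarrow> 'a::comm_ring_1" where
  "lc_one = (\<lambda>q. if q = 0 then 1 else 0)"

definition lc_inverse :: "(rat \<Rightarrow> 'a::comm_ring_1) \<Rightarrow> rat \<Rightarrow> 'a" where
  "lc_inverse a = (THE b. lc_left_finite b \<and> lc_mult a b = lc_one)"

definition lc_at_most_finite :: "(rat \<Rightarrow> 'a::zero) \<Rightarrow> bool" where
  "lc_at_most_finite a \<longleftrightarrow> (\<forall>q<0. a q = 0)"

definition lcr_pos :: "(rat \<Rightarrow> real) \<Rightarrow> bool" where
  "lcr_pos a \<longleftrightarrow> a \<noteq> (\<lambda>q. 0) \<and> a (LEAST q. a q \<noteq> 0) > 0"

definition lcr_le :: "(rat \<Rightarrow> real) \<Rightarrow> (rat \<Rightarrow> real) \<Rightarrow> bool" where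
  "lcr_le a b \<longleftrightarrow> a = b \<or> lcr_pos (\<lambda>q. b q - a q)"

definition lcr_sqrt :: "(rat \<Rightarrow> real) \<Rightarrow> rat \<Rightarrow> real" where
  "lcr_sqrt a = (THE r. lc_left_finite r \<and> lcr_le (\<lambda>q. 0) r \<and> lc_mult r r = a)"

definition lcc_abs :: "(rat \<Rightarrow> complex) \<Rightarrow> rat \<Rightarrow> real" where
  "lcc_abs z = (let re = (\<lambda>q. Re (z q)); im = (\<lambda>q. Im (z q))
                in lcr_sqrt (lc_add (lc_mult re re) (lc_mult im im)))"

definition lcc_of_lcr :: "(rat \<Rightarrow> real) \<Rightarrow> rat \<Rightarrow> complex" where
  "lcc_of_lcr a = (\<lambda>q. complex_of_real (a q))"

text \<open>Vectors in C^n: functions nat => (rat => complex), only indices < n matter.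
  Matrices: nat => nat => (rat => complex).\<close>

definition lc_vec :: "nat \<Rightarrow> (nat \<Rightarrow> rat \<Rightarrow> complex) \<Rightarrow> bool" where
  "lc_vec n x \<longleftrightarrow> (\<forall>i<n. lc_left_finite (x i))"

definition lc_mat :: "nat \<Rightarrow> (nat \<Rightarrow> nat \<Rightarrow> rat \<Rightarrow> complex) \<Rightarrow> bool" where
  "lc_mat n A \<longleftrightarrow> (\<forall>i<n. \<forall>j<n. lc_left_finite (A i j))"

definition lc_matvec :: "nat \<Rightarrow> (nat \<Rightarrow> nat \<Rightarrow> rat \<Rightarrow> complex) \<Rightarrow> (nat \<Rightarrow> rat \<Rightarrow> complex)
    \<Rightarrow> nat \<Rightarrow> rat \<Rightarrow> complex" where
  "lc_matvec n A x = (\<lambda>i q. \<Sum>j<n. lc_mult (A i j) (x j) q)"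

definition lc_matmul :: "nat \<Rightarrow> (nat \<Rightarrow> nat \<Rightarrow> rat \<Rightarrow> complex) \<Rightarrow> (nat \<Rightarrow> nat \<Rightarrow> rat \<Rightarrow> complex)
    \<Rightarrow> nat \<Rightarrow> nat \<Rightarrow> rat \<Rightarrow> complex" where
  "lc_matmul n A B = (\<lambda>i k q. \<Sum>j<n. lc_mult (A i j) (B j k) q)"

definition lc_idmat :: "nat \<Rightarrow> nat \<Rightarrow> rat \<Rightarrow> complex" where
  "lc_idmat = (\<lambda>i j. if i = j then lc_one else (\<lambda>q. 0))"

definition lc_diagmat :: "(nat \<Rightarrow> rat \<Rightarrow> complex) \<Rightarrow> nat \<Rightarrow> nat \<Rightarrow> rat \<Rightarrow> complex" where
  "lc_diagmat d = (\<lambda>i j. if i = j then d i else (\<lambda>q. 0))"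

definition lc_diagonalizable_with :: "nat \<Rightarrow> (nat \<Rightarrow> nat \<Rightarrow> rat \<Rightarrow> complex) \<Rightarrow> (nat \<Rightarrow> rat \<Rightarrow> complex) \<Rightarrow> bool" where
  "lc_diagonalizable_with n A d \<longleftrightarrow>
     (\<exists>P Q. lc_mat n P \<and> lc_mat n Q \<and>
        (\<forall>i<n. \<forall>j<n. lc_matmul n P Q i j = lc_idmat i j) \<and>
        (\<forall>i<n. \<forall>j<n. lc_matmul n Q P i j = lc_idmat i j) \<and>
        (\<forall>i<n. \<forall>j<n. A i j = lc_matmul n (lc_matmul n P (lc_diagmat d)) Q i j))"

definition lc_maxnorm :: "nat \<Rightarrow> (nat \<Rightarrow> rat \<Rightarrow> complex) \<Rightarrow> rat \<Rightarrow> real" where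
  "lc_maxnorm n x = (THE m. (\<exists>i<n. m = lcc_abs (x i)) \<and> (\<forall>i<n. lcr_le (lcc_abs (x i)) m))"

definition lc_normalize :: "nat \<Rightarrow> (nat \<Rightarrow> rat \<Rightarrow> complex) \<Rightarrow> nat \<Rightarrow> rat \<Rightarrow> complex" where
  "lc_normalize n x = (\<lambda>i. lc_mult (x i) (lc_inverse (lcc_of_lcr (lc_maxnorm n x))))"

definition lc_seminorm :: "(rat \<Rightarrow> complex) \<Rightarrow> real \<Rightarrow> real" where
  "lc_seminorm a s = (SUP q\<in>{q. real_of_rat q \<le> s}. cmod (a q))"

definition lc_wk_conv :: "(nat \<Rightarrow> rat \<Rightarrow> complex) \<Rightarrow> (rat \<Rightarrow> complex) \<Rightarrow> bool" where
  "lc_wk_conv a l \<longleftrightarrow> (\<forall>r::real. r > 0 \<longrightarrow>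
      (\<exists>N0. \<forall>k>N0. lc_seminorm (\<lambda>q. a k q - l q) (1 / r) < r))"

definition lc_vec_wk_conv :: "nat \<Rightarrow> (nat \<Rightarrow> nat \<Rightarrow> rat \<Rightarrow> complex) \<Rightarrow> (nat \<Rightarrow> rat \<Rightarrow> complex) \<Rightarrow> bool" where
  "lc_vec_wk_conv n xs l \<longleftrightarrow> (\<forall>i<n. lc_wk_conv (\<lambda>k. xs k i) (l i))"

end

theory Submission
  imports Defs "HOL-Library.Groups_Big_Fun" "HOL-Computational_Algebra.Formal_Power_Series"
begin


section \<open>Left-finite functions\<close>

lemma lf_def2: "lc_left_finite f \<longleftrightarrow> (\<forall>r. finite {q. q < r \<and> f q \<noteq> 0})"
  by (simp add: lc_left_finite_def)

lemma lf_le_finite: "lc_left_finite f \<Longrightarrow> finite {q. q \<le> r \<and> f q \<noteq> 0}"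
  unfolding lc_left_finite_def
  by (rule finite_subset[of _ "{q. q < r + 1 \<and> f q \<noteq> 0}"]) auto

lemma lf_lower:
  assumes "lc_left_finite f"
  obtains L where "\<And>q. f q \<noteq> 0 \<Longrightarrow> L \<le> q"
proof (cases "\<exists>q0. f q0 \<noteq> 0")
  case False then show ?thesis using that by auto
next
  case True
  then obtain q0 where q0: "f q0 \<noteq> 0" by auto
  let ?S = "{q. q \<le> q0 \<and> f q \<noteq> 0}"
  have fin: "finite ?S" using lf_le_finite[OF assms] .
  have ne: "?S \<noteq> {}" using q0 by auto
  have "\<And>q. f q \<noteq> 0 \<Longrightarrow> Min ?S \<le> q"
  proof -
    fix q assume "f q \<noteq> 0"
    show "Min ?S \<le> q"
    proof (cases "q \<le> q0")
      case True then show ?thesis using fin \<open>f q \<noteq> 0\<close> by (intro Min_le) auto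
    next
      case False
      have "Min ?S \<le> q0" using fin q0 by (intro Min_le) auto
      then show ?thesis using False by auto
    qed
  qed
  then show ?thesis using that by blast
qed

lemma lf_zero[simp]: "lc_left_finite (\<lambda>q. 0)"
  by (simp add: lc_left_finite_def)

lemma lf_add: "lc_left_finite f \<Longrightarrow> lc_left_finite g \<Longrightarrow> lc_left_finite (\<lambda>q. (f q :: 'a::monoid_add) + g q)"
  unfolding lc_left_finite_def
proof (intro allI)
  fix r assume A: "\<forall>r. finite {q. q < r \<and> f q \<noteq> 0}" and B: "\<forall>r. finite {q. q < r \<and> g q \<noteq> 0}"
  have "finite ({q. q < r \<and> f q \<noteq> 0} \<union> {q. q < r \<and> g q \<noteq> 0})" using A B by blast
  then show "finite {q. q < r \<and> f q + g q \<noteq> 0}"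
    by (rule finite_subset[rotated]) auto
qed

lemma lf_uminus: "lc_left_finite f \<Longrightarrow> lc_left_finite (\<lambda>q. - (f q :: 'a::group_add))"
  unfolding lc_left_finite_def by simp

lemma lf_diff: "lc_left_finite f \<Longrightarrow> lc_left_finite g \<Longrightarrow> lc_left_finite (\<lambda>q. (f q :: 'a::group_add) - g q)"
proof -
  assume "lc_left_finite f" "lc_left_finite g"
  then have "lc_left_finite (\<lambda>q. f q + - g q)" using lf_add[of f "\<lambda>q. - g q"] lf_uminus[of g] by blast
  then show ?thesis by (simp only: diff_conv_add_uminus)
qed

lemma lf_one: "lc_left_finite (lc_one :: rat \<Rightarrow> 'a::comm_ring_1)"
  unfolding lc_left_finite_def lc_one_def
  by (intro allI, rule finite_subset[of _ "{0}"]) auto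

lemma lf_map: "lc_left_finite f \<Longrightarrow> h 0 = 0 \<Longrightarrow> lc_left_finite (\<lambda>q. h (f q))"
  unfolding lc_left_finite_def
proof (intro allI)
  fix r assume "\<forall>r. finite {q. q < r \<and> f q \<noteq> 0}" "h 0 = 0"
  then have "finite {q. q < r \<and> f q \<noteq> 0}" by blast
  moreover have "{q. q < r \<and> h (f q) \<noteq> 0} \<subseteq> {q. q < r \<and> f q \<noteq> 0}" using \<open>h 0 = 0\<close> by auto
  ultimately show "finite {q. q < r \<and> h (f q) \<noteq> 0}" by (rule finite_subset[rotated])
qed

definition wnd :: "(rat \<Rightarrow> 'a::zero) \<Rightarrow> (rat \<Rightarrow> 'a) \<Rightarrow> rat \<Rightarrow> rat set" where
  "wnd a b q = {q1. a q1 \<noteq> 0 \<and> b (q - q1) \<noteq> 0}"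

lemma wnd_finite:
  assumes "lc_left_finite a" "lc_left_finite b"
  shows "finite (wnd a b q)"
proof -
  obtain L where L: "\<And>q. b q \<noteq> 0 \<Longrightarrow> L \<le> q" using lf_lower[OF assms(2)] by blast
  have "wnd a b q \<subseteq> {q1. q1 \<le> q - L \<and> a q1 \<noteq> 0}"
  proof
    fix q1 assume "q1 \<in> wnd a b q"
    then have "a q1 \<noteq> 0" "b (q - q1) \<noteq> 0" by (auto simp: wnd_def)
    then have "L \<le> q - q1" using L by blast
    then show "q1 \<in> {q1. q1 \<le> q - L \<and> a q1 \<noteq> 0}" using \<open>a q1 \<noteq> 0\<close> by simp
  qed
  then show ?thesis using lf_le_finite[OF assms(1), of "q - L"] by (rule finite_subset)
qed

lemma lc_mult_wnd: "lc_mult a b q = (\<Sum>q1\<in>wnd a b q. a q1 * b (q - q1))"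
  by (simp add: lc_mult_def wnd_def)

lemma lc_mult_any:
  assumes "lc_left_finite a" "lc_left_finite b"
  shows "lc_mult a b q = Sum_any (\<lambda>q1. a q1 * b (q - q1))"
  unfolding lc_mult_wnd
  by (rule Sum_any.expand_superset[symmetric, OF wnd_finite[OF assms]]) (auto simp: wnd_def)

lemma lc_mult_superset:
  assumes "finite F" "wnd a b q \<subseteq> F"
  shows "lc_mult a b q = (\<Sum>q1\<in>F. a q1 * b (q - q1))"
  unfolding lc_mult_wnd
  by (rule sum.mono_neutral_left[OF assms]) (auto simp: wnd_def)

lemma lc_mult_nz:
  assumes "lc_mult a b q \<noteq> 0"
  obtains q1 where "a q1 \<noteq> 0" "b (q - q1) \<noteq> 0"
proof -
  have "(\<Sum>q1\<in>wnd a b q. a q1 * b (q - q1)) \<noteq> 0" using assms by (simp add: lc_mult_wnd)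
  then obtain q1 where "q1 \<in> wnd a b q" by (meson sum.neutral)
  then show ?thesis using that by (auto simp: wnd_def)
qed

lemma lf_mult:
  assumes a: "lc_left_finite a" and b: "lc_left_finite b"
  shows "lc_left_finite (lc_mult a b)"
  unfolding lc_left_finite_def
proof
  fix r
  obtain La where La: "\<And>q. a q \<noteq> 0 \<Longrightarrow> La \<le> q" using lf_lower[OF a] by blast
  obtain Lb where Lb: "\<And>q. b q \<noteq> 0 \<Longrightarrow> Lb \<le> q" using lf_lower[OF b] by blast
  have "{q. q < r \<and> lc_mult a b q \<noteq> 0} \<subseteq>
     (\<lambda>(x,y). x + y) ` ({x. x \<le> r - Lb \<and> a x \<noteq> 0} \<times> {y. y \<le> r - La \<and> b y \<noteq> 0})"
  proof
    fix q assume "q \<in> {q. q < r \<and> lc_mult a b q \<noteq> 0}"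
    then have q: "q < r" "lc_mult a b q \<noteq> 0" by auto
    obtain q1 where "a q1 \<noteq> 0" "b (q - q1) \<noteq> 0" by (rule lc_mult_nz[OF q(2)])
    moreover note La[OF this(1)] Lb[OF this(2)]
    ultimately show "q \<in> (\<lambda>(x,y). x + y) ` ({x. x \<le> r - Lb \<and> a x \<noteq> 0} \<times> {y. y \<le> r - La \<and> b y \<noteq> 0})"
      using q by (intro image_eqI[of _ _ "(q1, q - q1)"]) auto
  qed
  moreover have "finite ((\<lambda>(x,y). x + y) ` ({x. x \<le> r - Lb \<and> a x \<noteq> 0} \<times> {y. y \<le> r - La \<and> b y \<noteq> 0}))"
    using lf_le_finite[OF a] lf_le_finite[OF b] by auto
  ultimately show "finite {q. q < r \<and> lc_mult a b q \<noteq> 0}" by (rule finite_subset)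
qed




lemma bij_cminus: "bij (\<lambda>x::'a::ab_group_add. c - x)"
  by (rule bij_betwI[where g="\<lambda>x. c - x"]) auto

lemma bij_addc: "bij (\<lambda>x::'a::ab_group_add. x + c)"
  by (rule bij_betwI[where g="\<lambda>x. x - c"]) auto

lemma bij_subc: "bij (\<lambda>x::'a::ab_group_add. x - c)"
  by (rule bij_betwI[where g="\<lambda>x. x + c"]) auto

lemma wnd_sub: "{q1. a q1 * b (q - q1) \<noteq> (0::'a::comm_ring_1)} \<subseteq> wnd a b q"
  by (auto simp: wnd_def)

lemma fin_prod_set:
  assumes "lc_left_finite a" "lc_left_finite (b :: rat \<Rightarrow> 'a::comm_ring_1)"
  shows "finite {q1. a q1 * b (q - q1) \<noteq> 0}"
  using wnd_finite[OF assms] wnd_sub by (rule finite_subset[rotated])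

lemma lc_mult_comm:
  fixes a b :: "rat \<Rightarrow> 'a::comm_ring_1"
  assumes "lc_left_finite a" "lc_left_finite b"
  shows "lc_mult a b = lc_mult b a"
proof
  fix q
  have "Sum_any (\<lambda>q1. a q1 * b (q - q1)) = Sum_any (\<lambda>q1. b q1 * a (q - q1))"
    by (rule Sum_any.reindex_cong[OF bij_cminus[of q]]) (auto simp: fun_eq_iff mult.commute)
  then show "lc_mult a b q = lc_mult b a q"
    by (simp add: lc_mult_any assms)
qed

lemma lc_mult_distrib:
  fixes a b c :: "rat \<Rightarrow> 'a::comm_ring_1"
  assumes "lc_left_finite a" "lc_left_finite b" "lc_left_finite c"
  shows "lc_mult a (\<lambda>q. b q + c q) q = lc_mult a b q + lc_mult a c q"
proof -
  have "lc_mult a (\<lambda>q. b q + c q) q = Sum_any (\<lambda>q1. a q1 * b (q - q1) + a q1 * c (q - q1))"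
    using lf_add[OF assms(2,3)] by (simp add: lc_mult_any assms distrib_left)
  also have "\<dots> = Sum_any (\<lambda>q1. a q1 * b (q - q1)) + Sum_any (\<lambda>q1. a q1 * c (q - q1))"
    by (rule Sum_any.distrib[OF fin_prod_set fin_prod_set]) (use assms in auto)
  finally show ?thesis by (simp add: lc_mult_any assms)
qed

lemma lc_mult_one:
  fixes a :: "rat \<Rightarrow> 'a::comm_ring_1"
  assumes "lc_left_finite a"
  shows "lc_mult a lc_one q = a q"
proof -
  have "lc_mult a lc_one q = Sum_any (\<lambda>q1. a q1 * lc_one (q - q1))"
    by (simp add: lc_mult_any assms lf_one)
  also have "\<dots> = Sum_any (\<lambda>q1. if q1 = q then a q1 else 0)"
    by (rule Sum_any.cong) (simp add: lc_one_def)
  also have "\<dots> = a q" by simp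
  finally show ?thesis .
qed

lemma lc_mult_assoc:
  fixes a b c :: "rat \<Rightarrow> 'a::comm_ring_1"
  assumes a: "lc_left_finite a" and b: "lc_left_finite b" and c: "lc_left_finite c"
  shows "lc_mult (lc_mult a b) c q = lc_mult a (lc_mult b c) q"
proof -
  obtain La where La: "\<And>q. a q \<noteq> 0 \<Longrightarrow> La \<le> q" using lf_lower[OF a] by blast
  obtain Lb where Lb: "\<And>q. b q \<noteq> 0 \<Longrightarrow> Lb \<le> q" using lf_lower[OF b] by blast
  obtain Lc where Lc: "\<And>q. c q \<noteq> 0 \<Longrightarrow> Lc \<le> q" using lf_lower[OF c] by blast
  define g where "g = (\<lambda>v p. a p * b (v - p) * c (q - v))"
  have "lc_mult (lc_mult a b) c q = Sum_any (\<lambda>v. lc_mult a b v * c (q - v))"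
    by (simp add: lc_mult_any lf_mult a b c)
  also have "\<dots> = Sum_any (\<lambda>v. Sum_any (\<lambda>p. g v p))"
  proof (rule Sum_any.cong)
    fix v
    have "lc_mult a b v * c (q - v) = Sum_any (\<lambda>p. a p * b (v - p)) * c (q - v)"
      by (simp add: lc_mult_any a b)
    also have "\<dots> = Sum_any (\<lambda>p. a p * b (v - p) * c (q - v))"
      by (rule Sum_any_left_distrib[OF fin_prod_set[OF a b]])
    finally show "lc_mult a b v * c (q - v) = Sum_any (g v)" by (simp add: g_def)
  qed
  also have "\<dots> = Sum_any (\<lambda>p. Sum_any (\<lambda>v. g v p))"
  proof (rule Sum_any.swap)
    let ?P = "{p. p \<le> q - Lc - Lb \<and> a p \<noteq> 0}"
    let ?V = "(\<lambda>w. q - w) ` {w. w \<le> q - La - Lb \<and> c w \<noteq> 0}"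
    show "finite (?V \<times> ?P)" using lf_le_finite[OF a] lf_le_finite[OF c] by blast
    show "{v. \<exists>p. g v p \<noteq> 0} \<times> {p. \<exists>v. g v p \<noteq> 0} \<subseteq> ?V \<times> ?P"
    proof
      fix z assume "z \<in> {v. \<exists>p. g v p \<noteq> 0} \<times> {p. \<exists>v. g v p \<noteq> 0}"
      then obtain v p p' v' where z: "z = (v, p)" and g1: "g v p' \<noteq> 0" and g2: "g v' p \<noteq> 0" by auto
      from g1 have 1: "a p' \<noteq> 0" "b (v - p') \<noteq> 0" "c (q - v) \<noteq> 0" by (auto simp: g_def)
      from g2 have 2: "a p \<noteq> 0" "b (v' - p) \<noteq> 0" "c (q - v') \<noteq> 0" by (auto simp: g_def)
      have "La \<le> p'" "Lb \<le> v - p'" using La[OF 1(1)] Lb[OF 1(2)] .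
      then have "q - v \<le> q - La - Lb" by simp
      then have "v \<in> ?V" using 1(3) by (intro image_eqI[of _ _ "q - v"]) auto
      have "Lb \<le> v' - p" "Lc \<le> q - v'" using Lb[OF 2(2)] Lc[OF 2(3)] .
      then have "p \<le> q - Lc - Lb" by simp
      then have "p \<in> ?P" using 2(1) by simp
      then show "z \<in> ?V \<times> ?P" using \<open>v \<in> ?V\<close> z by simp
    qed
  qed
  also have "\<dots> = Sum_any (\<lambda>p. a p * lc_mult b c (q - p))"
  proof (rule Sum_any.cong)
    fix p
    have "Sum_any (\<lambda>v. g v p) = Sum_any (\<lambda>u. a p * (b u * c (q - p - u)))"
      by (rule Sum_any.reindex_cong[OF bij_addc[of p]]) (auto simp: fun_eq_iff g_def mult.assoc diff_diff_eq add.commute)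
    also have "\<dots> = a p * Sum_any (\<lambda>u. b u * c (q - p - u))"
      by (rule Sum_any_right_distrib[symmetric, OF fin_prod_set[OF b c]])
    finally show "Sum_any (\<lambda>v. g v p) = a p * lc_mult b c (q - p)"
      by (simp add: lc_mult_any b c)
  qed
  also have "\<dots> = lc_mult a (lc_mult b c) q"
    by (simp add: lc_mult_any lf_mult a b c)
  finally show ?thesis .
qed


typedef (overloaded) 'a lc = "{f :: rat \<Rightarrow> 'a::zero. lc_left_finite f}"
  morphisms coef Abs_lc
  by (rule exI[of _ "\<lambda>q. 0"]) simp

setup_lifting type_definition_lc

lemma lf_coef[simp]: "lc_left_finite (coef x)"
  using coef[of x] by simp

lemma lc_eqI: "(\<And>q. coef x q = coef y q) \<Longrightarrow> x = y"
  by (metis coef_inject ext)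

lemma coef_Abs: "lc_left_finite f \<Longrightarrow> coef (Abs_lc f) = f"
  by (simp add: Abs_lc_inverse)

instantiation lc :: (comm_ring_1) comm_ring_1
begin
lift_definition zero_lc :: "'a lc" is "\<lambda>q. 0" by simp
lift_definition one_lc :: "'a lc" is "lc_one" by (rule lf_one)
lift_definition plus_lc :: "'a lc \<Rightarrow> 'a lc \<Rightarrow> 'a lc" is "\<lambda>f g q. f q + g q" by (rule lf_add)
lift_definition uminus_lc :: "'a lc \<Rightarrow> 'a lc" is "\<lambda>f q. - f q" by (rule lf_uminus)
lift_definition minus_lc :: "'a lc \<Rightarrow> 'a lc \<Rightarrow> 'a lc" is "\<lambda>f g q. f q - g q" by (rule lf_diff)
lift_definition times_lc :: "'a lc \<Rightarrow> 'a lc \<Rightarrow> 'a lc" is "lc_mult" by (rule lf_mult)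

lemma coef_zero[simp]: "coef 0 q = 0" by transfer simp
lemma coef_one: "coef 1 q = (if q = 0 then 1 else 0)" by transfer (simp add: lc_one_def)
lemma coef_add[simp]: "coef (x + y) q = coef x q + coef y q" by transfer simp
lemma coef_uminus[simp]: "coef (- x) q = - coef x q" by transfer simp
lemma coef_diff[simp]: "coef (x - y) q = coef x q - coef y q" by transfer simp
lemma coef_mult: "coef (x * y) = lc_mult (coef x) (coef y)" by transfer simp

instance
proof
  fix a b c :: "'a lc"
  show "a * b * c = a * (b * c)"
    by (rule lc_eqI) (simp add: coef_mult lc_mult_assoc)
  show "a * b = b * a"
    by (rule lc_eqI) (simp add: coef_mult lc_mult_comm[of "coef a" "coef b"])
  show "1 * a = a"
    by (rule lc_eqI) (simp add: coef_mult lc_mult_comm[of lc_one "coef a"] lc_mult_one one_lc.rep_eq lf_one)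
  show "(a + b) * c = a * c + b * c"
  proof (rule lc_eqI)
    fix q
    have "coef ((a + b) * c) q = lc_mult (coef c) (\<lambda>q. coef a q + coef b q) q"
      by (simp add: coef_mult lc_mult_comm[of "coef c"] plus_lc.rep_eq lf_add)
    also have "\<dots> = lc_mult (coef c) (coef a) q + lc_mult (coef c) (coef b) q"
      by (rule lc_mult_distrib) auto
    finally show "coef ((a + b) * c) q = coef (a * c + b * c) q"
      by (simp add: coef_mult lc_mult_comm[of "coef c"])
  qed
  show "(0::'a lc) \<noteq> 1"
  proof
    assume "(0::'a lc) = 1"
    then have "coef (0::'a lc) 0 = coef 1 0" by simp
    then show False by (simp add: coef_one)
  qed
qed (auto intro!: lc_eqI)

end

lemma coef_sum: "coef (\<Sum>i\<in>I. f i) q = (\<Sum>i\<in>I. coef (f i) q)"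
  by (induction I rule: infinite_finite_induct) auto

lemma coef_mult_any: "coef (x * y) q = Sum_any (\<lambda>q1. coef x q1 * coef y (q - q1))"
  by (simp add: coef_mult lc_mult_any)

lemma coef_mult_superset:
  assumes "finite F" "\<And>q1. coef x q1 \<noteq> 0 \<Longrightarrow> coef y (q - q1) \<noteq> 0 \<Longrightarrow> q1 \<in> F"
  shows "coef (x * y) q = (\<Sum>q1\<in>F. coef x q1 * coef y (q - q1))"
  unfolding coef_mult using assms by (intro lc_mult_superset) (auto simp: wnd_def)

lemma coef_mult_nz:
  assumes "coef (x * y) q \<noteq> 0"
  obtains q1 where "coef x q1 \<noteq> 0" "coef y (q - q1) \<noteq> 0"
  using assms unfolding coef_mult by (rule lc_mult_nz)




section \<open>Constants, valuations\<close>

lift_definition const :: "'a::comm_ring_1 \<Rightarrow> 'a lc" is "\<lambda>c q. if q = 0 then c else 0"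
proof -
  fix c :: 'a
  show "lc_left_finite (\<lambda>q. if q = 0 then c else 0)"
    unfolding lc_left_finite_def
  proof
    fix r show "finite {q. q < r \<and> (if q = 0 then c else 0) \<noteq> 0}"
      by (rule finite_subset[of _ "{0}"]) auto
  qed
qed

lemma coef_const: "coef (const c) q = (if q = 0 then c else 0)"
  by transfer simp

lemma coef_const_mult: "coef (const c * x) q = c * coef x q"
proof -
  have "coef (const c * x) q = Sum_any (\<lambda>q1. if q1 = 0 then c * coef x (q - q1) else 0)"
    unfolding coef_mult_any by (rule Sum_any.cong) (simp add: coef_const)
  also have "\<dots> = c * coef x q" by simp
  finally show ?thesis .
qed

lemma const_mult: "const (a * b) = const a * const b"
  by (rule lc_eqI) (simp add: coef_const_mult coef_const)

lemma const_one: "const 1 = 1"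
  by (rule lc_eqI) (simp add: coef_const coef_one)

lemma const_add: "const (a + b) = const a + const b"
  by (rule lc_eqI) (simp add: coef_const)

lemma const_diff: "const (a - b) = const a - const b"
  by (rule lc_eqI) (simp add: coef_const)

lemma const_zero: "const 0 = 0"
  by (rule lc_eqI) (simp add: coef_const)

definition amf :: "'a::zero lc \<Rightarrow> bool" where
  "amf x \<longleftrightarrow> (\<forall>q<0. coef x q = 0)"

definition small :: "'a::zero lc \<Rightarrow> bool" where
  "small x \<longleftrightarrow> (\<forall>q\<le>0. coef x q = 0)"

lemma small_amf: "small x \<Longrightarrow> amf x"
  by (simp add: small_def amf_def)

lemma amf_const: "amf (const c)"
  by (simp add: amf_def coef_const)

lemma amf_0: "amf 0" by (simp add: amf_def)
lemma amf_1: "amf 1" by (simp add: amf_def coef_one)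

lemma amf_add: "amf x \<Longrightarrow> amf y \<Longrightarrow> amf (x + y)"
  by (simp add: amf_def)
lemma amf_diff: "amf x \<Longrightarrow> amf y \<Longrightarrow> amf (x - y)"
  by (simp add: amf_def)
lemma amf_uminus: "amf x \<Longrightarrow> amf (- x)"
  by (simp add: amf_def)

lemma amf_mult:
  fixes x y :: "'a::comm_ring_1 lc"
  assumes "amf x" "amf y" shows "amf (x * y)"
  unfolding amf_def
proof (intro allI impI)
  fix q :: rat assume q: "q < 0"
  show "coef (x * y) q = 0"
  proof (rule ccontr)
    assume "coef (x * y) q \<noteq> 0"
    then obtain q1 where "coef x q1 \<noteq> 0" "coef y (q - q1) \<noteq> 0" by (rule coef_mult_nz)
    then have "0 \<le> q1" "0 \<le> q - q1" using assms unfolding amf_def by (meson not_le)+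
    then show False using q by simp
  qed
qed

lemma amf_sum: "(\<And>i. i \<in> I \<Longrightarrow> amf (f i)) \<Longrightarrow> amf (\<Sum>i\<in>I. f i)"
  by (simp add: amf_def coef_sum)

lemma amf_power: "amf (x :: 'a::comm_ring_1 lc) \<Longrightarrow> amf (x ^ n)"
  by (induction n) (simp_all add: amf_1 amf_mult)

lemma coef_mult_0:
  fixes x y :: "'a::comm_ring_1 lc"
  assumes "amf x" "amf y"
  shows "coef (x * y) 0 = coef x 0 * coef y 0"
proof -
  have "coef (x * y) 0 = (\<Sum>q1\<in>{0}. coef x q1 * coef y (0 - q1))"
  proof (rule coef_mult_superset)
    fix q1 assume "coef x q1 \<noteq> 0" "coef y (0 - q1) \<noteq> 0"
    then have "0 \<le> q1" "0 \<le> 0 - q1" using assms unfolding amf_def by (meson not_le)+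
    then show "q1 \<in> {0}" by simp
  qed simp
  then show ?thesis by simp
qed

lemma coef_power_0:
  fixes x :: "'a::comm_ring_1 lc"
  assumes "amf x" shows "coef (x ^ n) 0 = coef x 0 ^ n"
  by (induction n) (simp_all add: coef_one coef_mult_0 amf_power assms)

lemma locality:
  fixes x y y' :: "'a::comm_ring_1 lc"
  assumes "amf x" "\<And>q'. q' \<le> q \<Longrightarrow> coef y q' = coef y' q'"
  shows "coef (x * y) q = coef (x * y') q"
  unfolding coef_mult_any
proof (rule Sum_any.cong)
  fix q1
  show "coef x q1 * coef y (q - q1) = coef x q1 * coef y' (q - q1)"
  proof (cases "q1 < 0")
    case True then show ?thesis using assms(1) by (simp add: amf_def)
  next
    case False then show ?thesis using assms(2)[of "q - q1"] by simp
  qed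
qed

definition lam :: "'a::zero lc \<Rightarrow> rat" where
  "lam x = (LEAST q. coef x q \<noteq> 0)"

lemma lam_props:
  assumes "x \<noteq> 0"
  shows "coef x (lam x) \<noteq> 0" "\<And>q. q < lam x \<Longrightarrow> coef x q = 0"
proof -
  obtain q0 where q0: "coef x q0 \<noteq> 0"
    using assms by (metis coef_inject ext zero_lc.rep_eq)
  let ?S = "{q. q \<le> q0 \<and> coef x q \<noteq> 0}"
  have fin: "finite ?S" by (rule lf_le_finite) simp
  have mem: "Min ?S \<in> ?S" using fin q0 by (intro Min_in) auto
  have low: "\<And>y. coef x y \<noteq> 0 \<Longrightarrow> Min ?S \<le> y"
  proof -
    fix y assume y: "coef x y \<noteq> 0"
    show "Min ?S \<le> y"
    proof (cases "y \<le> q0")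
      case True then show ?thesis using fin y by (intro Min_le) auto
    next
      case False then show ?thesis using mem by auto
    qed
  qed
  have eq: "lam x = Min ?S"
    unfolding lam_def by (rule Least_equality) (use mem low in auto)
  show "coef x (lam x) \<noteq> 0" using mem eq by auto
  show "\<And>q. q < lam x \<Longrightarrow> coef x q = 0"
  proof -
    fix q assume a: "q < lam x"
    show "coef x q = 0"
    proof (rule ccontr)
      assume "coef x q \<noteq> 0"
      then have "Min ?S \<le> q" by (rule low)
      then show False using a eq by simp
    qed
  qed
qed

lemma lam_eq:
  assumes "coef x p \<noteq> 0" "\<And>q. q < p \<Longrightarrow> coef x q = 0"
  shows "lam x = p"
  unfolding lam_def by (rule Least_equality) (use assms in \<open>auto simp: not_less[symmetric]\<close>)

lemma nonzero_coef: "x \<noteq> 0 \<Longrightarrow> \<exists>q. coef x q \<noteq> 0"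
  by (metis coef_inject ext zero_lc.rep_eq)

lemma mult_lead:
  fixes x y :: "'a::idom lc"
  assumes "x \<noteq> 0" "y \<noteq> 0"
  shows "coef (x * y) (lam x + lam y) = coef x (lam x) * coef y (lam y)"
    and "\<And>q. q < lam x + lam y \<Longrightarrow> coef (x * y) q = 0"
proof -
  note lx = lam_props[OF assms(1)] and ly = lam_props[OF assms(2)]
  have "coef (x * y) (lam x + lam y) = (\<Sum>q1\<in>{lam x}. coef x q1 * coef y (lam x + lam y - q1))"
  proof (rule coef_mult_superset)
    fix q1 assume a: "coef x q1 \<noteq> 0" "coef y (lam x + lam y - q1) \<noteq> 0"
    then have "lam x \<le> q1" "lam y \<le> lam x + lam y - q1" using lx(2) ly(2) by (meson not_le)+
    then show "q1 \<in> {lam x}" by simp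
  qed simp
  then show "coef (x * y) (lam x + lam y) = coef x (lam x) * coef y (lam y)" by simp
  fix q assume q: "q < lam x + lam y"
  have "coef (x * y) q = (\<Sum>q1\<in>{}. coef x q1 * coef y (q - q1))"
  proof (rule coef_mult_superset)
    fix q1 assume a: "coef x q1 \<noteq> 0" "coef y (q - q1) \<noteq> 0"
    then have "lam x \<le> q1" "lam y \<le> q - q1" using lx(2) ly(2) by (meson not_le)+
    then show "q1 \<in> {}" using q by simp
  qed simp
  then show "coef (x * y) q = 0" by simp
qed

lemma lam_mult:
  fixes x y :: "'a::idom lc"
  assumes "x \<noteq> 0" "y \<noteq> 0"
  shows "x * y \<noteq> 0" "lam (x * y) = lam x + lam y"
proof -
  have nz: "coef (x * y) (lam x + lam y) \<noteq> 0"
    using mult_lead(1)[OF assms] lam_props(1)[OF assms(1)] lam_props(1)[OF assms(2)] by simp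
  then show "x * y \<noteq> 0" by auto
  show "lam (x * y) = lam x + lam y" by (rule lam_eq[OF nz mult_lead(2)[OF assms]])
qed

instance lc :: (idom) idom
proof
  fix a b :: "'a lc"
  assume "a \<noteq> 0" "b \<noteq> 0"
  then show "a * b \<noteq> 0" by (rule lam_mult(1))
qed

lemma pow_support:
  fixes e :: "'a::comm_ring_1 lc"
  assumes "\<And>q. coef e q \<noteq> 0 \<Longrightarrow> d \<le> q"
  shows "coef (e ^ m) q \<noteq> 0 \<Longrightarrow> of_nat m * d \<le> q"
proof (induction m arbitrary: q)
  case 0 then show ?case by (simp add: coef_one split: if_splits)
next
  case (Suc m)
  from Suc.prems have "coef (e * e ^ m) q \<noteq> 0" by simp
  then obtain q1 where "coef e q1 \<noteq> 0" "coef (e ^ m) (q - q1) \<noteq> 0" by (rule coef_mult_nz)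
  then have "d \<le> q1" "of_nat m * d \<le> q - q1" using assms Suc.IH by blast+
  then show ?case by (simp add: algebra_simps)
qed

lemma pow_zero_below:
  fixes e :: "'a::comm_ring_1 lc"
  assumes "\<And>q. coef e q \<noteq> 0 \<Longrightarrow> d \<le> q" "q < of_nat m * d"
  shows "coef (e ^ m) q = 0"
  proof (rule ccontr)
  assume "coef (e ^ m) q \<noteq> 0"
  then have "of_nat m * d \<le> q" using pow_support[of e d m q] assms(1) by blast
  then show False using assms(2) by simp
qed

lemma floor_bound:
  fixes q d :: rat
  assumes "0 < d"
  shows "q < of_nat (Suc (nat \<lfloor>q / d\<rfloor>)) * d"
proof -
  have "q / d < of_int \<lfloor>q / d\<rfloor> + 1" by linarith
  also have "\<dots> \<le> of_nat (Suc (nat \<lfloor>q / d\<rfloor>))" by simp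
  finally have "q / d < of_nat (Suc (nat \<lfloor>q / d\<rfloor>))" .
  then show ?thesis using assms by (simp add: divide_less_eq)
qed




section \<open>Evaluation of power series at small elements\<close>

definition dl :: "'a::zero lc \<Rightarrow> rat" where
  "dl e = Min (insert 1 {q. 0 < q \<and> q < 1 \<and> coef e q \<noteq> 0})"

lemma dl_fin: "finite {q. 0 < q \<and> q < 1 \<and> coef e q \<noteq> 0}"
proof -
  have "finite {q. q < 1 \<and> coef e q \<noteq> 0}" using lf_coef[of e] unfolding lc_left_finite_def by blast
  then show ?thesis by (rule finite_subset[rotated]) auto
qed

lemma dl_pos: "0 < dl e"
  unfolding dl_def using dl_fin by (subst Min_gr_iff) auto

lemma dl_le:
  assumes "small e" "coef e q \<noteq> 0"
  shows "dl e \<le> q"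
proof -
  have "0 < q" using assms unfolding small_def by (meson not_le)
  show ?thesis
  proof (cases "q < 1")
    case True
    then show ?thesis unfolding dl_def using dl_fin \<open>0 < q\<close> assms(2) by (intro Min_le) auto
  next
    case False
    have "dl e \<le> 1" unfolding dl_def using dl_fin by (intro Min_le) auto
    then show ?thesis using False by simp
  qed
qed

lemma dl_le': "small e \<Longrightarrow> \<forall>q. coef e q \<noteq> 0 \<longrightarrow> dl e \<le> q"
  using dl_le by blast

lemma pow_zero_below':
  fixes e :: "'a::comm_ring_1 lc"
  assumes "\<forall>q. coef e q \<noteq> 0 \<longrightarrow> d \<le> q" "q < of_nat m * d"
  shows "coef (e ^ m) q = 0"
  using assms pow_zero_below[of e d q m] by blast

lemma sum_stable:
  fixes e :: "'a::comm_ring_1 lc"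
  assumes "\<forall>q. coef e q \<noteq> 0 \<longrightarrow> d \<le> q" "q < of_nat (Suc N) * d" "N \<le> N'" "0 < d"
  shows "(\<Sum>m\<le>N'. c m * coef (e ^ m) q) = (\<Sum>m\<le>N. c m * coef (e ^ m) q)"
proof (rule sum.mono_neutral_right)
  show "\<forall>i\<in>{..N'} - {..N}. c i * coef (e ^ i) q = 0"
  proof
    fix i assume "i \<in> {..N'} - {..N}"
    then have "Suc N \<le> i" by auto
    then have "of_nat (Suc N) * d \<le> of_nat i * d" using assms(4)
      by (intro mult_right_mono) auto
    then have "q < of_nat i * d" using assms(2) by linarith
    then have "coef (e ^ i) q = 0" by (rule pow_zero_below'[OF assms(1)])
    then show "c i * coef (e ^ i) q = 0" by simp
  qed
qed (use assms(3) in auto)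

definition evc :: "'a::comm_ring_1 fps \<Rightarrow> 'a lc \<Rightarrow> rat \<Rightarrow> 'a" where
  "evc f e q = (\<Sum>m\<le>nat \<lfloor>q / dl e\<rfloor>. fps_nth f m * coef (e ^ m) q)"

lemma evc_eq:
  fixes e :: "'a::comm_ring_1 lc"
  assumes "small e" "0 < d" "\<forall>q. coef e q \<noteq> 0 \<longrightarrow> d \<le> q" "q < of_nat (Suc N) * d"
  shows "evc f e q = (\<Sum>m\<le>N. fps_nth f m * coef (e ^ m) q)"
proof -
  let ?N0 = "nat \<lfloor>q / dl e\<rfloor>"
  let ?M = "max N ?N0"
  have b0: "q < of_nat (Suc ?N0) * dl e" by (rule floor_bound[OF dl_pos])
  have "evc f e q = (\<Sum>m\<le>?M. fps_nth f m * coef (e ^ m) q)"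
    unfolding evc_def
    by (rule sum_stable[symmetric, OF _ b0 _ dl_pos]) (use dl_le'[OF assms(1)] in auto)
  also have "\<dots> = (\<Sum>m\<le>N. fps_nth f m * coef (e ^ m) q)"
    by (rule sum_stable[OF assms(3) assms(4) _ assms(2)]) auto
  finally show ?thesis .
qed

lemma lf_evc:
  fixes e :: "'a::comm_ring_1 lc"
  assumes "small e"
  shows "lc_left_finite (evc f e)"
  unfolding lc_left_finite_def
proof
  fix r
  let ?N = "nat \<lfloor>r / dl e\<rfloor>"
  have "{q. q < r \<and> evc f e q \<noteq> 0} \<subseteq> (\<Union>m\<le>?N. {q. q < r \<and> coef (e ^ m) q \<noteq> 0})"
  proof
    fix q assume "q \<in> {q. q < r \<and> evc f e q \<noteq> 0}"
    then have q: "q < r" "evc f e q \<noteq> 0" by auto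
    have "q < of_nat (Suc ?N) * dl e" using floor_bound[OF dl_pos, of r e] q(1) by simp
    then have "evc f e q = (\<Sum>m\<le>?N. fps_nth f m * coef (e ^ m) q)"
      by (rule evc_eq[OF assms dl_pos dl_le'[OF assms]])
    with q(2) obtain m where "m \<le> ?N" "coef (e ^ m) q \<noteq> 0"
      by (metis (no_types, lifting) atMost_iff mult_zero_right sum.neutral)
    then show "q \<in> (\<Union>m\<le>?N. {q. q < r \<and> coef (e ^ m) q \<noteq> 0})" using q(1) by auto
  qed
  moreover have "finite (\<Union>m\<le>?N. {q. q < r \<and> coef (e ^ m) q \<noteq> 0})"
    using lf_coef unfolding lc_left_finite_def by blast
  ultimately show "finite {q. q < r \<and> evc f e q \<noteq> 0}" by (rule finite_subset)
qed

definition ev :: "'a::comm_ring_1 fps \<Rightarrow> 'a lc \<Rightarrow> 'a lc" where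
  "ev f e = Abs_lc (evc f e)"

lemma coef_ev:
  fixes e :: "'a::comm_ring_1 lc"
  assumes "small e" "0 < d" "\<forall>q. coef e q \<noteq> 0 \<longrightarrow> d \<le> q" "q < of_nat (Suc N) * d"
  shows "coef (ev f e) q = (\<Sum>m\<le>N. fps_nth f m * coef (e ^ m) q)"
  unfolding ev_def coef_Abs[OF lf_evc[OF assms(1)]] by (rule evc_eq[OF assms])

lemma coef_ev_canon:
  fixes e :: "'a::comm_ring_1 lc"
  assumes "small e"
  shows "coef (ev f e) q = (\<Sum>m\<le>nat \<lfloor>q / dl e\<rfloor>. fps_nth f m * coef (e ^ m) q)"
  by (rule coef_ev[OF assms dl_pos dl_le'[OF assms] floor_bound[OF dl_pos]])

lemma ev_amf:
  fixes e :: "'a::comm_ring_1 lc"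
  assumes "small e" shows "amf (ev f e)"
  unfolding amf_def
proof (intro allI impI)
  fix q :: rat assume "q < 0"
  then have "\<And>m. coef (e ^ m) q = 0" using amf_power[OF small_amf[OF assms]] by (simp add: amf_def)
  then show "coef (ev f e) q = 0" by (simp add: coef_ev_canon[OF assms])
qed

lemma ev_coef0:
  fixes e :: "'a::comm_ring_1 lc"
  assumes "small e" shows "coef (ev f e) 0 = fps_nth f 0"
  using coef_ev[OF assms dl_pos dl_le'[OF assms], of 0 0 f] dl_pos[of e] by (simp add: coef_one)

lemma ev_add:
  fixes e :: "'a::comm_ring_1 lc"
  assumes "small e" shows "ev (f + g) e = ev f e + ev g e"
  by (rule lc_eqI) (simp add: coef_ev_canon[OF assms] sum.distrib distrib_right)

lemma ev_diff:
  fixes e :: "'a::comm_ring_1 lc"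
  assumes "small e" shows "ev (f - g) e = ev f e - ev g e"
  by (rule lc_eqI) (simp add: coef_ev_canon[OF assms] sum_subtractf left_diff_distrib)

lemma ev_const:
  fixes e :: "'a::comm_ring_1 lc"
  assumes "small e" shows "ev (fps_const c) e = const c"
proof (rule lc_eqI)
  fix q
  have "coef (ev (fps_const c) e) q = (\<Sum>m\<le>nat \<lfloor>q / dl e\<rfloor>. (if m = 0 then c * coef (e ^ m) q else 0))"
    unfolding coef_ev_canon[OF assms] by (rule sum.cong) auto
  also have "\<dots> = c * coef 1 q" by (simp add: sum.delta)
  finally show "coef (ev (fps_const c) e) q = coef (const c) q" by (simp add: coef_one coef_const)
qed

lemma ev_one:
  fixes e :: "'a::comm_ring_1 lc"
  assumes "small e" shows "ev 1 e = 1"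
  using ev_const[OF assms, of 1] by (simp add: const_one)

lemma ev_X:
  fixes e :: "'a::comm_ring_1 lc"
  assumes "small e" shows "ev fps_X e = e"
proof (rule lc_eqI)
  fix q
  let ?N = "Suc (nat \<lfloor>q / dl e\<rfloor>)"
  have "q < of_nat (Suc ?N) * dl e"
    using floor_bound[OF dl_pos, of q e] dl_pos[of e] by (simp add: algebra_simps)
  then have "coef (ev fps_X e) q = (\<Sum>m\<le>?N. fps_nth fps_X m * coef (e ^ m) q)"
    by (rule coef_ev[OF assms dl_pos dl_le'[OF assms]])
  also have "\<dots> = (\<Sum>m\<le>?N. (if m = 1 then coef (e ^ m) q else 0))"
    by (rule sum.cong) (auto simp: fps_X_def)
  also have "\<dots> = (if 1 \<in> {..?N} then coef (e ^ 1) q else 0)"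
    by (rule sum.delta) simp
  also have "\<dots> = coef e q" by (simp only: power_one_right if_True atMost_iff le_SucI order_refl Suc_le_mono One_nat_def le0 power_Suc power_0 mult_1_right)
  finally show "coef (ev fps_X e) q = coef e q" .
qed


lemma ev_mult:
  fixes e :: "'a::comm_ring_1 lc"
  assumes e: "small e" shows "ev (f * g) e = ev f e * ev g e"
proof (rule lc_eqI)
  fix q
  define N where "N = nat \<lfloor>q / dl e\<rfloor>"
  have hq: "q < of_nat (Suc N) * dl e" unfolding N_def by (rule floor_bound[OF dl_pos])
  define T where "T = (\<lambda>f :: 'a fps. (\<Sum>m\<le>N. const (fps_nth f m) * e ^ m))"
  have coefT: "\<And>f q'. coef (T f) q' = (\<Sum>m\<le>N. fps_nth f m * coef (e ^ m) q')"
    by (simp add: T_def coef_sum coef_const_mult)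
  have agree: "\<And>f q'. q' \<le> q \<Longrightarrow> coef (ev f e) q' = coef (T f) q'"
  proof -
    fix f :: "'a fps" and q' :: rat assume "q' \<le> q"
    then have "q' < of_nat (Suc N) * dl e" using hq by simp
    then show "coef (ev f e) q' = coef (T f) q'"
      unfolding coefT by (rule coef_ev[OF e dl_pos dl_le'[OF e]])
  qed
  have amfT: "\<And>f. amf (T f)"
    unfolding T_def by (intro amf_sum amf_mult amf_const amf_power small_amf[OF e])
  have "coef (ev f e * ev g e) q = coef (ev g e * ev f e) q" by (simp add: mult.commute)
  also have "\<dots> = coef (ev g e * T f) q" by (rule locality[OF ev_amf[OF e] agree])
  also have "\<dots> = coef (T f * ev g e) q" by (simp add: mult.commute)
  also have "\<dots> = coef (T f * T g) q" by (rule locality[OF amfT agree])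
  also have "T f * T g = (\<Sum>i\<le>N. \<Sum>j\<le>N. const (fps_nth f i * fps_nth g j) * e ^ (i + j))"
    unfolding T_def sum_product by (simp add: const_mult power_add mult_ac)
  finally have "coef (ev f e * ev g e) q = (\<Sum>i\<le>N. \<Sum>j\<le>N. fps_nth f i * fps_nth g j * coef (e ^ (i + j)) q)"
    by (simp add: coef_sum coef_const_mult)
  also have "\<dots> = (\<Sum>(i,j)\<in>{..N} \<times> {..N}. fps_nth f i * fps_nth g j * coef (e ^ (i + j)) q)"
    by (rule sum.cartesian_product)
  also have "\<dots> = (\<Sum>(i,j)\<in>{(i,j). i + j \<le> N}. fps_nth f i * fps_nth g j * coef (e ^ (i + j)) q)"
  proof (rule sum.mono_neutral_right)
    show "finite ({..N} \<times> {..N})" by simp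
    show "{(i,j). i + j \<le> N} \<subseteq> {..N} \<times> {..N}" by auto
    show "\<forall>x\<in>{..N} \<times> {..N} - {(i,j). i + j \<le> N}.
       (case x of (i, j) \<Rightarrow> fps_nth f i * fps_nth g j * coef (e ^ (i + j)) q) = 0"
    proof
      fix x assume x: "x \<in> {..N} \<times> {..N} - {(i,j). i + j \<le> N}"
      obtain i j where ij: "x = (i, j)" by (cases x)
      with x have "Suc N \<le> i + j" by auto
      then have "of_nat (Suc N) * dl e \<le> of_nat (i + j) * dl e"
        using dl_pos[of e] by (intro mult_right_mono) auto
      then have "q < of_nat (i + j) * dl e" using hq by linarith
      then have "coef (e ^ (i + j)) q = 0" by (rule pow_zero_below'[OF dl_le'[OF e]])
      then show "(case x of (i, j) \<Rightarrow> fps_nth f i * fps_nth g j * coef (e ^ (i + j)) q) = 0"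
        using ij by simp
    qed
  qed
  also have "\<dots> = (\<Sum>k\<le>N. \<Sum>i\<le>k. fps_nth f i * fps_nth g (k - i) * coef (e ^ (i + (k - i))) q)"
    by (rule sum.triangle_reindex_eq)
  also have "\<dots> = (\<Sum>k\<le>N. fps_nth (f * g) k * coef (e ^ k) q)"
  proof (rule sum.cong[OF refl])
    fix k assume "k \<in> {..N}"
    have "(\<Sum>i\<le>k. fps_nth f i * fps_nth g (k - i) * coef (e ^ (i + (k - i))) q)
        = (\<Sum>i\<le>k. fps_nth f i * fps_nth g (k - i)) * coef (e ^ k) q"
      unfolding sum_distrib_right by (rule sum.cong) auto
    also have "\<dots> = fps_nth (f * g) k * coef (e ^ k) q"
      by (simp add: fps_mult_nth atLeast0AtMost)
    finally show "(\<Sum>i\<le>k. fps_nth f i * fps_nth g (k - i) * coef (e ^ (i + (k - i))) q)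
        = fps_nth (f * g) k * coef (e ^ k) q" .
  qed
  also have "\<dots> = coef (ev (f * g) e) q"
    by (rule coef_ev[OF e dl_pos dl_le'[OF e] hq, symmetric])
  finally show "coef (ev (f * g) e) q = coef (ev f e * ev g e) q" by simp
qed




lift_definition sh :: "rat \<Rightarrow> 'a::zero lc \<Rightarrow> 'a lc" is "\<lambda>a f q. f (q - a)"
proof -
  fix a :: rat and f :: "rat \<Rightarrow> 'a"
  assume lf: "lc_left_finite f"
  show "lc_left_finite (\<lambda>q. f (q - a))"
    unfolding lc_left_finite_def
  proof
    fix r
    have "{q. q < r \<and> f (q - a) \<noteq> 0} \<subseteq> (\<lambda>p. p + a) ` {p. p < r - a \<and> f p \<noteq> 0}"
    proof
      fix q assume "q \<in> {q. q < r \<and> f (q - a) \<noteq> 0}"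
      then show "q \<in> (\<lambda>p. p + a) ` {p. p < r - a \<and> f p \<noteq> 0}"
        by (intro image_eqI[of _ _ "q - a"]) auto
    qed
    moreover have "finite ((\<lambda>p. p + a) ` {p. p < r - a \<and> f p \<noteq> 0})"
      using lf unfolding lc_left_finite_def by blast
    ultimately show "finite {q. q < r \<and> f (q - a) \<noteq> 0}" by (rule finite_subset)
  qed
qed

lemma coef_sh: "coef (sh a x) q = coef x (q - a)"
  by transfer simp

lemma sh_0: "sh 0 x = x"
  by (rule lc_eqI) (simp add: coef_sh)

lemma sh_sh: "sh a (sh b x) = sh (a + b) x"
  by (rule lc_eqI) (simp add: coef_sh diff_diff_eq add.commute)

lemma sh_mult:
  fixes x y :: "'a::comm_ring_1 lc"
  shows "sh a x * sh b y = sh (a + b) (x * y)"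
proof (rule lc_eqI)
  fix q
  have "Sum_any (\<lambda>q1. coef x (q1 - a) * coef y (q - q1 - b))
      = Sum_any (\<lambda>p. coef x p * coef y (q - (a + b) - p))"
    by (rule Sum_any.reindex_cong[OF bij_addc[of a]]) (auto simp: fun_eq_iff algebra_simps)
  then show "coef (sh a x * sh b y) q = coef (sh (a + b) (x * y)) q"
    by (simp add: coef_mult_any coef_sh)
qed

section \<open>Inverses\<close>

definition iv :: "'a::field lc \<Rightarrow> 'a lc" where
  "iv u = const (inverse (coef u 0)) * ev (inverse (1 - fps_X)) (1 - const (inverse (coef u 0)) * u)"

lemma iv_small:
  fixes u :: "'a::field lc"
  assumes "amf u" "coef u 0 \<noteq> 0"
  shows "small (1 - const (inverse (coef u 0)) * u)"
  unfolding small_def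
proof (intro allI impI)
  fix q :: rat assume "q \<le> 0"
  then show "coef (1 - const (inverse (coef u 0)) * u) q = 0"
    using assms by (cases "q = 0") (auto simp: coef_one coef_const_mult amf_def)
qed

lemma iv_right:
  fixes u :: "'a::field lc"
  assumes "amf u" "coef u 0 \<noteq> 0"
  shows "u * iv u = 1"
proof -
  let ?c = "coef u 0"
  let ?e = "1 - const (inverse ?c) * u"
  note s = iv_small[OF assms]
  define e where "e = ?e"
  have "u * iv u = (const (inverse ?c) * u) * ev (inverse (1 - fps_X)) e"
    unfolding iv_def e_def by (simp add: mult_ac)
  also have "const (inverse ?c) * u = ev (1 - fps_X) e"
    using s unfolding e_def[symmetric] by (simp add: ev_diff ev_one ev_X e_def)
  also have "ev (1 - fps_X) e * ev (inverse (1 - fps_X)) e = ev ((1 - fps_X) * inverse (1 - fps_X)) e"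
    using s unfolding e_def[symmetric] by (rule ev_mult[symmetric])
  also have "(1 - fps_X) * inverse (1 - fps_X) = (1 :: 'a fps)"
    by (rule inverse_mult_eq_1') simp
  finally show ?thesis using s unfolding e_def[symmetric] by (simp add: ev_one)
qed

lemma iv_amf:
  fixes u :: "'a::field lc"
  assumes "amf u" "coef u 0 \<noteq> 0"
  shows "amf (iv u)"
  unfolding iv_def by (intro amf_mult amf_const ev_amf iv_small[OF assms])

lemma exists_right_inverse:
  fixes x :: "'a::field lc"
  assumes "x \<noteq> 0"
  shows "\<exists>y. x * y = 1"
proof -
  let ?u = "sh (- lam x) x"
  note lp = lam_props[OF assms]
  have amf: "amf ?u" unfolding amf_def by (auto simp: coef_sh intro!: lp(2))
  have c0: "coef ?u 0 \<noteq> 0" using lp(1) by (simp add: coef_sh)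
  have x: "x = sh (lam x) ?u" by (simp add: sh_sh sh_0)
  have "x * sh (- lam x) (iv ?u) = sh (lam x) ?u * sh (- lam x) (iv ?u)" using x by simp
  also have "\<dots> = 1" by (simp add: sh_mult iv_right[OF amf c0] sh_0)
  finally show ?thesis by blast
qed

instantiation lc :: (field) field
begin
definition inverse_lc :: "'a lc \<Rightarrow> 'a lc" where
  "inverse_lc x = (if x = 0 then 0 else (SOME y. x * y = 1))"
definition divide_lc :: "'a lc \<Rightarrow> 'a lc \<Rightarrow> 'a lc" where
  "divide_lc x y = x * inverse y"
lemma inv_lc_aux: "(a :: 'a lc) \<noteq> 0 \<Longrightarrow> a * (SOME y. a * y = 1) = 1"
  using exists_right_inverse[of a] by (rule_tac someI_ex) simp

instance
  by standard (auto simp: inverse_lc_def divide_lc_def mult.commute inv_lc_aux)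
end

lemma inverse_amf:
  fixes u :: "'a::field lc"
  assumes "amf u" "coef u 0 \<noteq> 0"
  shows "inverse u = iv u"
  by (rule inverse_unique[OF iv_right[OF assms]])

lemma lc_inverse_coef:
  fixes x :: "'a::field lc"
  assumes "x \<noteq> 0"
  shows "lc_inverse (coef x) = coef (inverse x)"
  unfolding lc_inverse_def
proof (rule the1_equality)
  have "lc_mult (coef x) (coef (inverse x)) = coef (x * inverse x)" by (simp add: coef_mult)
  also have "\<dots> = lc_one" using assms by (simp add: one_lc.rep_eq)
  finally have P: "lc_left_finite (coef (inverse x)) \<and> lc_mult (coef x) (coef (inverse x)) = lc_one" by simp
  show "\<exists>!b. lc_left_finite b \<and> lc_mult (coef x) b = lc_one"
  proof (rule ex1I[where a="coef (inverse x)"])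
    show "lc_left_finite (coef (inverse x)) \<and> lc_mult (coef x) (coef (inverse x)) = lc_one" by (rule P)
  next
    fix b assume b: "lc_left_finite b \<and> lc_mult (coef x) b = lc_one"
    then have "coef (x * Abs_lc b) = coef 1" by (simp add: coef_mult coef_Abs one_lc.rep_eq)
    then have "x * Abs_lc b = 1" by (simp add: coef_inject)
    then have "Abs_lc b = inverse x" by (rule inverse_unique[symmetric])
    then show "b = coef (inverse x)" using b by (metis coef_Abs)
  qed
  show "lc_left_finite (coef (inverse x)) \<and> lc_mult (coef x) (coef (inverse x)) = lc_one" by (rule P)
qed




section \<open>Order on real lc\<close>

definition pos :: "real lc \<Rightarrow> bool" where
  "pos x \<longleftrightarrow> x \<noteq> 0 \<and> coef x (lam x) > 0"

definition nonneg :: "real lc \<Rightarrow> bool" where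
  "nonneg x \<longleftrightarrow> x = 0 \<or> pos x"

lemma coef_eq_zero_iff: "coef x = (\<lambda>q. 0) \<longleftrightarrow> x = 0"
  using coef_inject[of x 0] by (simp add: zero_lc.rep_eq)

lemma lcr_pos_coef: "lcr_pos (coef x) \<longleftrightarrow> pos x"
  unfolding lcr_pos_def pos_def lam_def by (simp add: coef_eq_zero_iff)

lemma lcr_nonneg_coef: "lcr_le (\<lambda>q. 0) (coef x) \<longleftrightarrow> nonneg x"
proof -
  have "(\<lambda>q. coef x q - 0) = coef x" by simp
  then show ?thesis unfolding lcr_le_def nonneg_def lcr_pos_coef[symmetric]
    using coef_eq_zero_iff[of x] by auto
qed

lemma pos_lead:
  assumes "coef x p > 0" "\<And>q. q < p \<Longrightarrow> coef x q = 0"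
  shows "pos x" "lam x = p"
proof -
  have "coef x p \<noteq> 0" using assms(1) by simp
  then show lx: "lam x = p" by (rule lam_eq) (rule assms(2))
  have "x \<noteq> 0" using assms(1) by auto
  then show "pos x" using assms(1) lx by (simp add: pos_def)
qed

lemma nonneg_mult:
  assumes "nonneg x" "nonneg y" shows "nonneg (x * y)"
proof (cases "x = 0 \<or> y = 0")
  case True then show ?thesis by (auto simp: nonneg_def)
next
  case False
  then have px: "pos x" and py: "pos y" using assms by (auto simp: nonneg_def)
  have "x \<noteq> 0" "y \<noteq> 0" using False by auto
  note ml = mult_lead[OF this]
  have "coef (x * y) (lam x + lam y) > 0" using px py by (simp add: ml(1) pos_def)
  then have "pos (x * y)" using ml(2) by (rule pos_lead)
  then show ?thesis by (simp add: nonneg_def)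
qed

lemma sq_nonneg: "nonneg (x * x)"
proof (cases "x = 0")
  case True then show ?thesis by (simp add: nonneg_def)
next
  case False
  note ml = mult_lead[OF False False]
  have "coef (x * x) (lam x + lam x) > 0" unfolding ml(1) using lam_props(1)[OF False] not_real_square_gt_zero[of "coef x (lam x)"] by blast
  then have "pos (x * x)" using ml(2) by (rule pos_lead)
  then show ?thesis by (simp add: nonneg_def)
qed

lemma nonneg_antisym:
  assumes "nonneg x" "nonneg (- x)" shows "x = 0"
proof (rule ccontr)
  assume nz: "x \<noteq> 0"
  then have "pos x" "pos (- x)" using assms by (auto simp: nonneg_def)
  have "lam (- x) = lam x" unfolding lam_def by simp
  then show False using \<open>pos x\<close> \<open>pos (- x)\<close> by (simp add: pos_def)
qed

lemma sqrt_unique: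
  assumes "nonneg r1" "nonneg r2" "r1 * r1 = r2 * r2"
  shows "r1 = r2"
proof -
  have "(r1 - r2) * (r1 + r2) = 0" using assms(3) by (simp add: algebra_simps)
  then have "r1 = r2 \<or> r1 = - r2" by (auto simp: eq_neg_iff_add_eq_0)
  then show ?thesis
  proof
    assume e: "r1 = - r2"
    then have "r2 = 0" using nonneg_antisym[of r2] assms(1,2) by simp
    then show ?thesis using e by simp
  qed
qed

section \<open>Square roots\<close>

lemma sqrt_amf_exists:
  fixes u :: "real lc"
  assumes "amf u" "coef u 0 > 0"
  shows "const (sqrt (coef u 0)) * ev (fps_binomial (1/2)) (const (inverse (coef u 0)) * u - 1) *
         (const (sqrt (coef u 0)) * ev (fps_binomial (1/2)) (const (inverse (coef u 0)) * u - 1)) = u"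
    (is "?r * ?r = u")
    and "small (const (inverse (coef u 0)) * u - 1)"
proof -
  let ?c = "coef u 0"
  show s: "small (const (inverse ?c) * u - 1)"
    unfolding small_def
  proof (intro allI impI)
    fix q :: rat assume "q \<le> 0"
    then show "coef (const (inverse ?c) * u - 1) q = 0"
      using assms by (cases "q = 0") (auto simp: coef_one coef_const_mult amf_def)
  qed
  define e where "e = const (inverse ?c) * u - 1"
  have "?r * ?r = (const (sqrt ?c) * const (sqrt ?c)) * (ev (fps_binomial (1/2)) e * ev (fps_binomial (1/2)) e)"
    unfolding e_def by (simp add: mult_ac)
  also have "ev (fps_binomial (1/2)) e * ev (fps_binomial (1/2)) e = ev (fps_binomial (1/2) * fps_binomial (1/2)) e"
    using s unfolding e_def[symmetric] by (rule ev_mult[symmetric])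
  also have "fps_binomial (1/2) * fps_binomial (1/2) = (fps_binomial 1 :: real fps)"
    by (simp add: fps_binomial_add_mult[symmetric])
  also have "\<dots> = 1 + fps_X" by (rule fps_binomial_1)
  also have "ev (1 + fps_X) e = 1 + e"
    using s unfolding e_def[symmetric] by (simp add: ev_add ev_one ev_X)
  also have "const (sqrt ?c) * const (sqrt ?c) = const ?c"
    using assms(2) by (simp add: const_mult[symmetric])
  also have "const ?c * (1 + e) = u"
    unfolding e_def using assms(2) by (simp add: algebra_simps const_mult[symmetric] const_one)
  finally show "?r * ?r = u" .
qed

lemma sqrt_amf_coef0:
  fixes u :: "real lc"
  assumes "amf u" "coef u 0 > 0"
  shows "coef (const (sqrt (coef u 0)) * ev (fps_binomial (1/2)) (const (inverse (coef u 0)) * u - 1)) 0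
         = sqrt (coef u 0)"
  and "amf (const (sqrt (coef u 0)) * ev (fps_binomial (1/2)) (const (inverse (coef u 0)) * u - 1))"
  using sqrt_amf_exists(2)[OF assms]
  by (simp_all add: coef_const_mult ev_coef0 amf_mult amf_const ev_amf)

lemma sqrt_exists:
  fixes s :: "real lc"
  assumes "nonneg s"
  shows "\<exists>r. nonneg r \<and> r * r = s"
proof (cases "s = 0")
  case True then show ?thesis by (intro exI[of _ 0]) (simp add: nonneg_def)
next
  case False
  then have ps: "pos s" using assms by (simp add: nonneg_def)
  let ?m = "lam s"
  let ?u = "sh (- ?m) s"
  note lp = lam_props[OF False]
  have amf: "amf ?u" unfolding amf_def by (auto simp: coef_sh intro!: lp(2))
  have c0: "coef ?u 0 > 0" using ps by (simp add: coef_sh pos_def)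
  define r0 where "r0 = const (sqrt (coef ?u 0)) * ev (fps_binomial (1/2)) (const (inverse (coef ?u 0)) * ?u - 1)"
  have r0sq: "r0 * r0 = ?u" unfolding r0_def by (rule sqrt_amf_exists(1)[OF amf c0])
  have r00: "coef r0 0 > 0" unfolding r0_def sqrt_amf_coef0(1)[OF amf c0] using c0 by simp
  have r0amf: "amf r0" unfolding r0_def by (rule sqrt_amf_coef0(2)[OF amf c0])
  define r where "r = sh (?m / 2) r0"
  have "r * r = sh (?m / 2 + ?m / 2) (r0 * r0)" unfolding r_def by (rule sh_mult)
  also have "\<dots> = s" unfolding r0sq by (simp add: sh_sh sh_0)
  finally have rr: "r * r = s" .
  have "coef r (?m / 2) > 0" unfolding r_def using r00 by (simp add: coef_sh)
  moreover have "\<And>q. q < ?m / 2 \<Longrightarrow> coef r q = 0"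
    unfolding r_def using r0amf by (simp add: coef_sh amf_def)
  ultimately have "pos r" by (rule pos_lead)
  then show ?thesis using rr by (auto simp: nonneg_def)
qed

lemma lcr_sqrt_coef:
  fixes s :: "real lc"
  assumes "nonneg s" "nonneg r" "r * r = s"
  shows "lcr_sqrt (coef s) = coef r"
  unfolding lcr_sqrt_def
proof (rule the1_equality)
  have P: "lc_left_finite (coef r) \<and> lcr_le (\<lambda>q. 0) (coef r) \<and> lc_mult (coef r) (coef r) = coef s"
    using assms by (simp add: lcr_nonneg_coef coef_mult[symmetric])
  show "\<exists>!b. lc_left_finite b \<and> lcr_le (\<lambda>q. 0) b \<and> lc_mult b b = coef s"
  proof (rule ex1I[where a="coef r"])
    show "lc_left_finite (coef r) \<and> lcr_le (\<lambda>q. 0) (coef r) \<and> lc_mult (coef r) (coef r) = coef s" by (rule P)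
  next
    fix b assume b: "lc_left_finite b \<and> lcr_le (\<lambda>q. 0) b \<and> lc_mult b b = coef s"
    then have "nonneg (Abs_lc b)" "Abs_lc b * Abs_lc b = s"
      by (simp_all add: lcr_nonneg_coef[symmetric] coef_Abs coef_inject[symmetric] coef_mult)
    then have "Abs_lc b = r" using sqrt_unique assms by metis
    then show "b = coef r" using b by (metis coef_Abs)
  qed
  show "lc_left_finite (coef r) \<and> lcr_le (\<lambda>q. 0) (coef r) \<and> lc_mult (coef r) (coef r) = coef s" by (rule P)
qed




section \<open>Complex absolute value\<close>

lift_definition cc :: "real lc \<Rightarrow> complex lc" is "\<lambda>f q. complex_of_real (f q)"
  by (rule lf_map) simp_all

lift_definition rel :: "complex lc \<Rightarrow> real lc" is "\<lambda>f q. Re (f q)"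
  by (rule lf_map) simp_all

lift_definition iml :: "complex lc \<Rightarrow> real lc" is "\<lambda>f q. Im (f q)"
  by (rule lf_map) simp_all

lemma coef_cc: "coef (cc t) q = complex_of_real (coef t q)" by transfer simp
lemma coef_rel: "coef (rel z) q = Re (coef z q)" by transfer simp
lemma coef_iml: "coef (iml z) q = Im (coef z q)" by transfer simp

lemma lcc_of_lcr_coef: "lcc_of_lcr (coef t) = coef (cc t)"
  by (simp add: lcc_of_lcr_def fun_eq_iff coef_cc)

lemma cc_mult: "cc (a * b) = cc a * cc b"
proof (rule lc_eqI)
  fix q
  have "coef (cc a * cc b) q = Sum_any (\<lambda>q1. complex_of_real (coef a q1 * coef b (q - q1)))"
    unfolding coef_mult_any by (simp add: coef_cc)
  also have "\<dots> = complex_of_real (Sum_any (\<lambda>q1. coef a q1 * coef b (q - q1)))"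
  proof -
    let ?W = "wnd (coef a) (coef b) q"
    have fin: "finite ?W" by (rule wnd_finite) simp_all
    have "Sum_any (\<lambda>q1. complex_of_real (coef a q1 * coef b (q - q1))) = (\<Sum>q1\<in>?W. complex_of_real (coef a q1 * coef b (q - q1)))"
      by (rule Sum_any.expand_superset[OF fin]) (auto simp: wnd_def)
    also have "\<dots> = complex_of_real (\<Sum>q1\<in>?W. coef a q1 * coef b (q - q1))" by simp
    also have "(\<Sum>q1\<in>?W. coef a q1 * coef b (q - q1)) = Sum_any (\<lambda>q1. coef a q1 * coef b (q - q1))"
      by (rule Sum_any.expand_superset[OF fin, symmetric]) (auto simp: wnd_def)
    finally show ?thesis .
  qed
  finally show "coef (cc (a * b)) q = coef (cc a * cc b) q" by (simp add: coef_cc coef_mult_any)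
qed

lemma cc_add: "cc (a + b) = cc a + cc b" by (rule lc_eqI) (simp add: coef_cc)
lemma cc_one: "cc 1 = 1" by (rule lc_eqI) (simp add: coef_cc coef_one)
lemma cc_zero: "cc 0 = 0" by (rule lc_eqI) (simp add: coef_cc)
lemma cc_power: "cc (a ^ n) = cc a ^ n" by (induction n) (simp_all add: cc_one cc_mult)
lemma cc_eq0: "cc a = 0 \<longleftrightarrow> a = 0"
proof
  assume "cc a = 0"
  then have "\<And>q. coef (cc a) q = 0" by simp
  then show "a = 0" by (intro lc_eqI) (simp add: coef_cc)
qed (simp add: cc_zero)

lemma rel_mult_cc: "rel (cc t * z) = t * rel z"
proof (rule lc_eqI)
  fix q
  let ?W = "wnd (coef (cc t)) (coef z) q"
  have fin: "finite ?W" by (rule wnd_finite) simp_all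
  have "coef (rel (cc t * z)) q = Re (\<Sum>q1\<in>?W. complex_of_real (coef t q1) * coef z (q - q1))"
    by (simp add: coef_rel coef_mult lc_mult_wnd coef_cc)
  also have "\<dots> = (\<Sum>q1\<in>?W. coef t q1 * Re (coef z (q - q1)))"
    by (simp add: Re_sum)
  also have "\<dots> = coef (t * rel z) q"
  proof -
    have "coef (t * rel z) q = (\<Sum>q1\<in>?W. coef t q1 * coef (rel z) (q - q1))"
      by (rule coef_mult_superset[OF fin]) (auto simp: wnd_def coef_cc coef_rel)
    then show ?thesis by (simp add: coef_rel)
  qed
  finally show "coef (rel (cc t * z)) q = coef (t * rel z) q" .
qed

lemma iml_mult_cc: "iml (cc t * z) = t * iml z"
proof (rule lc_eqI)
  fix q
  let ?W = "wnd (coef (cc t)) (coef z) q"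
  have fin: "finite ?W" by (rule wnd_finite) simp_all
  have "coef (iml (cc t * z)) q = Im (\<Sum>q1\<in>?W. complex_of_real (coef t q1) * coef z (q - q1))"
    by (simp add: coef_iml coef_mult lc_mult_wnd coef_cc)
  also have "\<dots> = (\<Sum>q1\<in>?W. coef t q1 * Im (coef z (q - q1)))"
    by (simp add: Im_sum)
  also have "\<dots> = coef (t * iml z) q"
  proof -
    have "coef (t * iml z) q = (\<Sum>q1\<in>?W. coef t q1 * coef (iml z) (q - q1))"
      by (rule coef_mult_superset[OF fin]) (auto simp: wnd_def coef_cc coef_iml)
    then show ?thesis by (simp add: coef_iml)
  qed
  finally show "coef (iml (cc t * z)) q = coef (t * iml z) q" .
qed

lemma rel_add: "rel (a + b) = rel a + rel b" by (rule lc_eqI) (simp add: coef_rel)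
lemma iml_add: "iml (a + b) = iml a + iml b" by (rule lc_eqI) (simp add: coef_iml)

definition tsq :: "complex lc \<Rightarrow> real lc" where
  "tsq z = rel z * rel z + iml z * iml z"

lemma pos_sq_sum_aux:
  fixes a b :: "real lc"
  assumes "a \<noteq> 0" "b \<noteq> 0" "lam a \<le> lam b"
  shows "pos (a * a + b * b)"
proof -
  note ma = mult_lead[OF assms(1) assms(1)] and mb = mult_lead[OF assms(2) assms(2)]
  let ?p = "lam a + lam a"
  have "coef (a * a) ?p > 0" unfolding ma(1)
    using lam_props(1)[OF assms(1)] not_real_square_gt_zero[of "coef a (lam a)"] by blast
  moreover have "coef (b * b) ?p \<ge> 0"
  proof (cases "?p < lam b + lam b")
    case True then show ?thesis using mb(2) by simp
  next
    case False
    then have "?p = lam b + lam b" using assms(3) by simp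
    then show ?thesis using mb(1) by simp
  qed
  ultimately have "coef (a * a + b * b) ?p > 0" by simp
  moreover have "\<And>q. q < ?p \<Longrightarrow> coef (a * a + b * b) q = 0"
    using ma(2) mb(2) assms(3) by simp
  ultimately show ?thesis by (rule pos_lead)
qed

lemma nonneg_sq_sum: "nonneg (a * a + b * b)"
proof (cases "a = 0 \<or> b = 0")
  case True then show ?thesis using sq_nonneg[of a] sq_nonneg[of b] by auto
next
  case False
  then have "a \<noteq> 0" "b \<noteq> 0" by auto
  then have "pos (a * a + b * b)"
    using pos_sq_sum_aux[of a b] pos_sq_sum_aux[of b a] by (cases "lam a \<le> lam b") (auto simp: add.commute)
  then show ?thesis by (simp add: nonneg_def)
qed

lemma tsq_nonneg: "nonneg (tsq z)"
  unfolding tsq_def by (rule nonneg_sq_sum)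

definition cabs :: "complex lc \<Rightarrow> real lc" where
  "cabs z = (SOME r. nonneg r \<and> r * r = tsq z)"

lemma cabs: "nonneg (cabs z)" "cabs z * cabs z = tsq z"
proof -
  have "\<exists>r. nonneg r \<and> r * r = tsq z" by (rule sqrt_exists[OF tsq_nonneg])
  then have "nonneg (cabs z) \<and> cabs z * cabs z = tsq z" unfolding cabs_def by (rule someI_ex)
  then show "nonneg (cabs z)" "cabs z * cabs z = tsq z" by auto
qed

lemma cabs_unique: "nonneg r \<Longrightarrow> r * r = tsq z \<Longrightarrow> cabs z = r"
  using sqrt_unique cabs by metis

lemma lcc_abs_coef: "lcc_abs (coef z) = coef (cabs z)"
proof -
  have "lc_add (lc_mult (\<lambda>q. Re (coef z q)) (\<lambda>q. Re (coef z q))) (lc_mult (\<lambda>q. Im (coef z q)) (\<lambda>q. Im (coef z q)))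
        = coef (tsq z)"
    unfolding tsq_def by (simp add: lc_add_def coef_mult fun_eq_iff coef_rel[abs_def] coef_iml[abs_def])
  then show ?thesis
    unfolding lcc_abs_def Let_def using lcr_sqrt_coef[OF tsq_nonneg cabs(1) cabs(2)] by simp
qed

lemma cabs_cc_mult:
  assumes "nonneg t" shows "cabs (cc t * z) = t * cabs z"
proof (rule cabs_unique)
  show "nonneg (t * cabs z)" by (rule nonneg_mult[OF assms cabs(1)])
  have "(t * cabs z) * (t * cabs z) = t * t * (cabs z * cabs z)" by (simp add: mult_ac)
  also have "\<dots> = tsq (cc t * z)" unfolding cabs(2) tsq_def rel_mult_cc iml_mult_cc
    by (simp add: algebra_simps)
  finally show "(t * cabs z) * (t * cabs z) = tsq (cc t * z)" .
qed

lemma amf_rel: "amf z \<Longrightarrow> amf (rel z)" by (simp add: amf_def coef_rel)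
lemma amf_iml: "amf z \<Longrightarrow> amf (iml z)" by (simp add: amf_def coef_iml)
lemma amf_cc: "amf t \<Longrightarrow> amf (cc t)" by (simp add: amf_def coef_cc)

lemma tsq_amf: "amf z \<Longrightarrow> amf (tsq z) \<and> coef (tsq z) 0 = (cmod (coef z 0))\<^sup>2"
  unfolding tsq_def
  by (simp add: amf_add amf_mult amf_rel amf_iml coef_mult_0 coef_rel coef_iml cmod_def power2_eq_square)

lemma cabs_amf:
  assumes "amf z"
  shows "amf (cabs z)" "coef (cabs z) 0 = cmod (coef z 0)"
proof -
  let ?r = "cabs z" and ?T = "tsq z"
  have Ta: "amf ?T" and T0: "coef ?T 0 = (cmod (coef z 0))\<^sup>2" using tsq_amf[OF assms] by auto
  have "amf ?r \<and> coef ?r 0 = cmod (coef z 0)"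
  proof (cases "?r = 0")
    case True
    then have "?T = 0" using cabs(2)[of z] by simp
    then have "cmod (coef z 0) = 0" using T0 by simp
    then show ?thesis using True by (simp add: amf_0)
  next
    case False
    have pr: "pos ?r" using cabs(1)[of z] False by (simp add: nonneg_def)
    note ml = mult_lead[OF False False]
    have rT: "?r * ?r = ?T" by (rule cabs(2))
    have Tnz: "coef ?T (lam ?r + lam ?r) \<noteq> 0" using ml(1) rT lam_props(1)[OF False] by simp
    then have "0 \<le> lam ?r + lam ?r" using Ta unfolding amf_def by (meson not_le)
    then have lr: "0 \<le> lam ?r" by simp
    have amfr: "amf ?r" unfolding amf_def using lam_props(2)[OF False] lr by simp
    show ?thesis
    proof (cases "lam ?r = 0")
      case True
      have "coef ?T 0 = coef ?r 0 * coef ?r 0" using coef_mult_0[OF amfr amfr] rT by simp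
      moreover have "coef ?r 0 > 0" using pr True by (simp add: pos_def)
      ultimately have "coef ?r 0 = cmod (coef z 0)"
        using T0 by (metis norm_ge_zero power2_eq_square real_sqrt_abs2 abs_of_pos abs_of_nonneg real_sqrt_mult_self)
      then show ?thesis using amfr by simp
    next
      case False
      then have lp: "0 < lam ?r" using lr by simp
      then have "coef ?r 0 = 0" using lam_props(2)[OF \<open>?r \<noteq> 0\<close>] by simp
      moreover have "coef ?T 0 = 0" using ml(2)[of 0] lp rT by simp
      ultimately show ?thesis using T0 amfr by simp
    qed
  qed
  then show "amf ?r" "coef ?r 0 = cmod (coef z 0)" by auto
qed




lemma lcr_le_antisym:
  assumes "lcr_le a b" "lcr_le b a" shows "a = b"
proof (rule ccontr)
  assume ne: "a \<noteq> b"
  then have p1: "lcr_pos (\<lambda>q. b q - a q)" and p2: "lcr_pos (\<lambda>q. a q - b q)"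
    using assms unfolding lcr_le_def by auto
  have "(\<lambda>q. a q - b q \<noteq> 0) = (\<lambda>q. b q - a q \<noteq> 0)" by (auto simp: fun_eq_iff)
  then have L: "(LEAST q. a q - b q \<noteq> 0) = (LEAST q. b q - a q \<noteq> 0)" by simp
  from p1 p2 show False unfolding lcr_pos_def L by simp
qed

lemma maxnorm_eq:
  fixes Z :: "nat \<Rightarrow> complex lc"
  assumes i0: "i0 < n" and amf: "\<And>i. i < n \<Longrightarrow> amf (Z i)"
    and lt: "\<And>i. i < n \<Longrightarrow> i \<noteq> i0 \<Longrightarrow> cmod (coef (Z i) 0) < cmod (coef (Z i0) 0)"
    and f: "\<And>i. i < n \<Longrightarrow> f i = coef (Z i)"
  shows "lc_maxnorm n f = coef (cabs (Z i0))"
  unfolding lc_maxnorm_def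
proof (rule the_equality)
  let ?m = "coef (cabs (Z i0))"
  have le: "lcr_le (lcc_abs (f i)) ?m" if i: "i < n" for i
  proof (cases "i = i0")
    case True then show ?thesis using i by (simp add: f lcc_abs_coef lcr_le_def)
  next
    case False
    let ?D = "cabs (Z i0) - cabs (Z i)"
    have "amf ?D" using amf i i0 by (intro amf_diff cabs_amf)
    moreover have "coef ?D 0 > 0"
      using lt[OF i False] cabs_amf(2)[OF amf[OF i]] cabs_amf(2)[OF amf[OF i0]] by simp
    ultimately have "pos ?D" by (intro pos_lead(1)[of ?D 0]) (auto simp: amf_def)
    then have "lcr_pos (coef ?D)" by (simp add: lcr_pos_coef)
    moreover have "coef ?D = (\<lambda>q. ?m q - coef (cabs (Z i)) q)" by (simp add: fun_eq_iff)
    ultimately have "lcr_pos (\<lambda>q. ?m q - coef (cabs (Z i)) q)" by simp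
    then show ?thesis using i by (simp add: f lcc_abs_coef lcr_le_def)
  qed
  show "(\<exists>i<n. ?m = lcc_abs (f i)) \<and> (\<forall>i<n. lcr_le (lcc_abs (f i)) ?m)"
    using le i0 by (auto simp: f lcc_abs_coef)
  fix m assume m: "(\<exists>i<n. m = lcc_abs (f i)) \<and> (\<forall>i<n. lcr_le (lcc_abs (f i)) m)"
  then obtain j where j: "j < n" "m = lcc_abs (f j)" by auto
  have "lcr_le ?m m" using m i0 by (auto simp: f lcc_abs_coef)
  moreover have "lcr_le m ?m" using le[OF j(1)] j(2) by simp
  ultimately show "m = ?m" by (rule lcr_le_antisym[rotated])
qed

section \<open>Convergence with a common support monoid\<close>

definition mon :: "rat set \<Rightarrow> bool" where
  "mon M \<longleftrightarrow> 0 \<in> M \<and> (\<forall>a\<in>M. \<forall>b\<in>M. a + b \<in> M) \<and> (\<forall>a\<in>M. 0 \<le> a) \<and> (\<forall>r. finite {q\<in>M. q \<le> r})"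

definition supin :: "rat set \<Rightarrow> 'a::zero lc \<Rightarrow> bool" where
  "supin M x \<longleftrightarrow> (\<forall>q. coef x q \<noteq> 0 \<longrightarrow> q \<in> M)"

definition mconv :: "rat set \<Rightarrow> (nat \<Rightarrow> 'a::real_normed_field lc) \<Rightarrow> 'a lc \<Rightarrow> bool" where
  "mconv M X L \<longleftrightarrow> eventually (\<lambda>k. supin M (X k)) sequentially \<and> supin M L \<and>
     (\<forall>q. ((\<lambda>k. coef (X k) q) \<longlongrightarrow> coef L q) sequentially)"

lemma supin_amf: "mon M \<Longrightarrow> supin M x \<Longrightarrow> amf x"
  unfolding mon_def supin_def amf_def by (meson not_le)

lemma supin_0: "supin M 0" by (simp add: supin_def)
lemma supin_const: "mon M \<Longrightarrow> supin M (const c)" by (simp add: supin_def mon_def coef_const)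
lemma supin_1: "mon M \<Longrightarrow> supin M (1::'a::comm_ring_1 lc)" using supin_const[of M "1::'a"] by (simp add: const_one)
lemma supin_add: "supin M x \<Longrightarrow> supin M y \<Longrightarrow> supin M (x + y)"
  unfolding supin_def by (metis add.right_neutral coef_add)
lemma supin_uminus: "supin M x \<Longrightarrow> supin M (- x)"
  unfolding supin_def by simp
lemma supin_diff: "supin M x \<Longrightarrow> supin M y \<Longrightarrow> supin M (x - y)"
  unfolding supin_def by (metis coef_diff diff_self diff_zero)

lemma supin_mult:
  fixes x y :: "'a::comm_ring_1 lc"
  assumes "mon M" "supin M x" "supin M y" shows "supin M (x * y)"
  unfolding supin_def
proof (intro allI impI)
  fix q assume "coef (x * y) q \<noteq> 0"
  then obtain q1 where "coef x q1 \<noteq> 0" "coef y (q - q1) \<noteq> 0" by (rule coef_mult_nz)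
  then have "q1 \<in> M" "q - q1 \<in> M" using assms(2,3) unfolding supin_def by blast+
  then have "q1 + (q - q1) \<in> M" using assms(1) unfolding mon_def by blast
  then show "q \<in> M" by simp
qed

lemma supin_power: "mon M \<Longrightarrow> supin M (x :: 'a::comm_ring_1 lc) \<Longrightarrow> supin M (x ^ n)"
  by (induction n) (simp_all add: supin_1 supin_mult)

lemma supin_sum: "(\<And>i. i \<in> I \<Longrightarrow> supin M (f i)) \<Longrightarrow> supin M (\<Sum>i\<in>I. f i)"
  by (induction I rule: infinite_finite_induct) (simp_all add: supin_0 supin_add)

lemma supin_ev:
  fixes e :: "'a::comm_ring_1 lc"
  assumes "mon M" "small e" "supin M e" shows "supin M (ev f e)"
  unfolding supin_def
proof (intro allI impI)
  fix q assume "coef (ev f e) q \<noteq> 0"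
  then have "(\<Sum>m\<le>nat \<lfloor>q / dl e\<rfloor>. fps_nth f m * coef (e ^ m) q) \<noteq> 0"
    by (simp add: coef_ev_canon[OF assms(2)])
  then obtain m where "fps_nth f m * coef (e ^ m) q \<noteq> 0" by (meson sum.neutral)
  then have "coef (e ^ m) q \<noteq> 0" by auto
  then show "q \<in> M" using supin_power[OF assms(1,3)] unfolding supin_def by blast
qed

definition dM :: "rat set \<Rightarrow> rat" where
  "dM M = Min (insert 1 {q\<in>M. 0 < q \<and> q < 1})"

lemma dM_fin: "mon M \<Longrightarrow> finite {q\<in>M. 0 < q \<and> q < 1}"
  unfolding mon_def by (rule finite_subset[of _ "{q\<in>M. q \<le> 1}"]) auto

lemma dM_pos: "mon M \<Longrightarrow> 0 < dM M"
  unfolding dM_def using dM_fin by (subst Min_gr_iff) auto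

lemma dM_le: "mon M \<Longrightarrow> q \<in> M \<Longrightarrow> 0 < q \<Longrightarrow> dM M \<le> q"
proof (cases "q < 1")
  case True
  assume "mon M" "q \<in> M" "0 < q"
  then show ?thesis unfolding dM_def using dM_fin True by (intro Min_le) auto
next
  case False
  assume "mon M"
  then have "dM M \<le> 1" unfolding dM_def using dM_fin by (intro Min_le) auto
  then show ?thesis using False by simp
qed

lemma small_supin_bound:
  assumes "mon M" "small e" "supin M e"
  shows "\<forall>q. coef e q \<noteq> 0 \<longrightarrow> dM M \<le> q"
proof (intro allI impI)
  fix q assume "coef e q \<noteq> 0"
  then have "q \<in> M" "0 < q" using assms(2,3) unfolding supin_def small_def by (auto simp: not_le[symmetric])
  then show "dM M \<le> q" by (rule dM_le[OF assms(1)])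
qed

lemma coef_mult_M:
  fixes x y :: "'a::comm_ring_1 lc"
  assumes "mon M" "supin M x" "supin M y"
  shows "coef (x * y) q = (\<Sum>q1\<in>{p\<in>M. p \<le> q}. coef x q1 * coef y (q - q1))"
proof (rule coef_mult_superset)
  show "finite {p\<in>M. p \<le> q}" using assms(1) by (simp add: mon_def)
  fix q1 assume "coef x q1 \<noteq> 0" "coef y (q - q1) \<noteq> 0"
  then have "q1 \<in> M" "q - q1 \<in> M" using assms unfolding supin_def by blast+
  then have "0 \<le> q - q1" using assms(1) unfolding mon_def by blast
  then show "q1 \<in> {p\<in>M. p \<le> q}" using \<open>q1 \<in> M\<close> by simp
qed

lemma mconv_cong:
  assumes "mconv M X L" "eventually (\<lambda>k. X k = Y k) sequentially"
  shows "mconv M Y L"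
proof -
  have e1: "eventually (\<lambda>k. supin M (Y k)) sequentially"
    using assms unfolding mconv_def by (auto elim: eventually_elim2)
  have "\<And>q. ((\<lambda>k. coef (Y k) q) \<longlongrightarrow> coef L q) sequentially"
  proof -
    fix q
    have "((\<lambda>k. coef (X k) q) \<longlongrightarrow> coef L q) sequentially" using assms(1) by (simp add: mconv_def)
    moreover have "eventually (\<lambda>k. coef (X k) q = coef (Y k) q) sequentially"
      using assms(2) by (auto elim: eventually_mono)
    ultimately show "((\<lambda>k. coef (Y k) q) \<longlongrightarrow> coef L q) sequentially" by (rule Lim_transform_eventually)
  qed
  then show ?thesis using e1 assms(1) by (simp add: mconv_def)
qed

lemma mconv_constseq: "supin M L \<Longrightarrow> mconv M (\<lambda>k. L) L"
  by (simp add: mconv_def)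

lemma mconv_const:
  assumes "mon M" "(a \<longlongrightarrow> c) sequentially"
  shows "mconv M (\<lambda>k. const (a k)) (const c)"
  unfolding mconv_def using assms by (simp add: supin_const coef_const)

lemma mconv_add: "mconv M X L \<Longrightarrow> mconv M Y L' \<Longrightarrow> mconv M (\<lambda>k. X k + Y k) (L + L')"
  unfolding mconv_def by (auto intro: tendsto_add supin_add elim: eventually_elim2)

lemma mconv_diff: "mconv M X L \<Longrightarrow> mconv M Y L' \<Longrightarrow> mconv M (\<lambda>k. X k - Y k) (L - L')"
  unfolding mconv_def by (auto intro: tendsto_diff supin_diff elim: eventually_elim2)

lemma mconv_mult:
  assumes M: "mon M" and X: "mconv M X L" and Y: "mconv M Y L'"
  shows "mconv M (\<lambda>k. X k * Y k) (L * L')"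
proof -
  have ev: "eventually (\<lambda>k. supin M (X k) \<and> supin M (Y k)) sequentially"
    using X Y unfolding mconv_def by (auto elim: eventually_elim2)
  have sL: "supin M L" "supin M L'" using X Y by (auto simp: mconv_def)
  have "((\<lambda>k. coef (X k * Y k) q) \<longlongrightarrow> coef (L * L') q) sequentially" for q
  proof -
    have "((\<lambda>k. \<Sum>q1\<in>{p\<in>M. p \<le> q}. coef (X k) q1 * coef (Y k) (q - q1)) \<longlongrightarrow>
           (\<Sum>q1\<in>{p\<in>M. p \<le> q}. coef L q1 * coef L' (q - q1))) sequentially"
      using X Y unfolding mconv_def by (intro tendsto_sum tendsto_mult) auto
    moreover have "eventually (\<lambda>k. (\<Sum>q1\<in>{p\<in>M. p \<le> q}. coef (X k) q1 * coef (Y k) (q - q1)) = coef (X k * Y k) q) sequentially"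
      using ev by (rule eventually_mono) (simp add: coef_mult_M[OF M])
    ultimately have "((\<lambda>k. coef (X k * Y k) q) \<longlongrightarrow> (\<Sum>q1\<in>{p\<in>M. p \<le> q}. coef L q1 * coef L' (q - q1))) sequentially"
      by (rule Lim_transform_eventually)
    then show ?thesis by (simp add: coef_mult_M[OF M sL])
  qed
  moreover have "eventually (\<lambda>k. supin M (X k * Y k)) sequentially"
    using ev by (rule eventually_mono) (simp add: supin_mult[OF M])
  ultimately show ?thesis using supin_mult[OF M sL] by (simp add: mconv_def)
qed

lemma mconv_power:
  assumes "mon M" "mconv M X L" shows "mconv M (\<lambda>k. X k ^ m) (L ^ m)"
proof (induction m)
  case 0 then show ?case using mconv_constseq[OF supin_1[OF assms(1)]] by simp
next
  case (Suc m) then show ?case using mconv_mult[OF assms(1) assms(2) Suc] by simp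
qed

lemma mconv_sum:
  assumes "mon M" "\<And>i. i \<in> I \<Longrightarrow> mconv M (X i) (L i)"
  shows "mconv M (\<lambda>k. \<Sum>i\<in>I. X i k) (\<Sum>i\<in>I. L i)"
  using assms(2)
proof (induction I rule: infinite_finite_induct)
  case (infinite A) then show ?case using mconv_constseq[OF supin_0] by simp
next
  case empty then show ?case using mconv_constseq[OF supin_0] by simp
next
  case (insert x F) then show ?case by (simp add: mconv_add)
qed

lemma mconv_ev:
  fixes E :: "nat \<Rightarrow> 'a::real_normed_field lc"
  assumes M: "mon M" and E: "mconv M E e" and sE: "eventually (\<lambda>k. small (E k)) sequentially" and se: "small e"
  shows "mconv M (\<lambda>k. ev f (E k)) (ev f e)"
proof -
  have ev: "eventually (\<lambda>k. small (E k) \<and> supin M (E k)) sequentially"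
    using sE E unfolding mconv_def by (auto elim: eventually_elim2)
  have she: "supin M e" using E by (simp add: mconv_def)
  have "((\<lambda>k. coef (ev f (E k)) q) \<longlongrightarrow> coef (ev f e) q) sequentially" for q
  proof -
    define N where "N = nat \<lfloor>q / dM M\<rfloor>"
    have hq: "q < of_nat (Suc N) * dM M" unfolding N_def by (rule floor_bound[OF dM_pos[OF M]])
    have P: "\<And>m. mconv M (\<lambda>k. E k ^ m) (e ^ m)" by (rule mconv_power[OF M E])
    have "((\<lambda>k. \<Sum>m\<le>N. fps_nth f m * coef (E k ^ m) q) \<longlongrightarrow> (\<Sum>m\<le>N. fps_nth f m * coef (e ^ m) q)) sequentially"
      using P unfolding mconv_def by (intro tendsto_sum tendsto_mult tendsto_const) auto
    moreover have "eventually (\<lambda>k. (\<Sum>m\<le>N. fps_nth f m * coef (E k ^ m) q) = coef (ev f (E k)) q) sequentially"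
      using ev by (rule eventually_mono)
        (metis coef_ev[OF _ dM_pos[OF M] small_supin_bound[OF M] hq])
    ultimately have "((\<lambda>k. coef (ev f (E k)) q) \<longlongrightarrow> (\<Sum>m\<le>N. fps_nth f m * coef (e ^ m) q)) sequentially"
      by (rule Lim_transform_eventually)
    then show ?thesis
      using coef_ev[OF se dM_pos[OF M] small_supin_bound[OF M se she] hq] by simp
  qed
  moreover have "eventually (\<lambda>k. supin M (ev f (E k))) sequentially"
    using ev by (rule eventually_mono) (simp add: supin_ev[OF M])
  ultimately show ?thesis using supin_ev[OF M se she] by (simp add: mconv_def)
qed




lemma mconv_coef0_ev:
  assumes "mconv M X L" "coef L 0 \<noteq> 0"
  shows "eventually (\<lambda>k. coef (X k) 0 \<noteq> 0) sequentially"
proof -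
  have "((\<lambda>k. coef (X k) 0) \<longlongrightarrow> coef L 0) sequentially" using assms(1) by (simp add: mconv_def)
  then show ?thesis by (rule tendsto_imp_eventually_ne[OF _ assms(2)])
qed

lemma mconv_inverse:
  fixes U :: "nat \<Rightarrow> 'a::real_normed_field lc"
  assumes M: "mon M" and U: "mconv M U u" and u0: "coef u 0 \<noteq> 0"
  shows "mconv M (\<lambda>k. inverse (U k)) (inverse u)"
proof -
  have su: "supin M u" using U by (simp add: mconv_def)
  have amfu: "amf u" by (rule supin_amf[OF M su])
  have ev: "eventually (\<lambda>k. coef (U k) 0 \<noteq> 0 \<and> supin M (U k)) sequentially"
    using mconv_coef0_ev[OF U u0] U unfolding mconv_def by (auto elim: eventually_elim2)
  have c: "((\<lambda>k. coef (U k) 0) \<longlongrightarrow> coef u 0) sequentially" using U by (simp add: mconv_def)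
  have A: "mconv M (\<lambda>k. const (inverse (coef (U k) 0))) (const (inverse (coef u 0)))"
    by (rule mconv_const[OF M tendsto_inverse[OF c u0]])
  have E: "mconv M (\<lambda>k. 1 - const (inverse (coef (U k) 0)) * U k) (1 - const (inverse (coef u 0)) * u)"
    by (rule mconv_diff[OF mconv_constseq[OF supin_1[OF M]] mconv_mult[OF M A U]])
  have sE: "eventually (\<lambda>k. small (1 - const (inverse (coef (U k) 0)) * U k)) sequentially"
    using ev by (rule eventually_mono) (auto intro!: iv_small supin_amf[OF M])
  have "mconv M (\<lambda>k. const (inverse (coef (U k) 0)) * ev (inverse (1 - fps_X)) (1 - const (inverse (coef (U k) 0)) * U k))
         (const (inverse (coef u 0)) * ev (inverse (1 - fps_X)) (1 - const (inverse (coef u 0)) * u))"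
    by (rule mconv_mult[OF M A mconv_ev[OF M E sE iv_small[OF amfu u0]]])
  then have "mconv M (\<lambda>k. iv (U k)) (iv u)" by (simp add: iv_def)
  then have "mconv M (\<lambda>k. iv (U k)) (inverse u)" by (simp add: inverse_amf[OF amfu u0])
  moreover have "eventually (\<lambda>k. iv (U k) = inverse (U k)) sequentially"
    using ev by (rule eventually_mono) (simp add: inverse_amf supin_amf[OF M])
  ultimately show ?thesis by (rule mconv_cong)
qed

lemma mconv_cc:
  assumes "mconv M T t" shows "mconv M (\<lambda>k. cc (T k)) (cc t)"
proof -
  have s: "\<And>x. supin M x \<Longrightarrow> supin M (cc x)" by (simp add: supin_def coef_cc)
  show ?thesis using assms unfolding mconv_def
    by (auto simp: coef_cc intro: tendsto_of_real s elim: eventually_mono)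
qed

lemma mconv_rel:
  assumes "mconv M Z z" shows "mconv M (\<lambda>k. rel (Z k)) (rel z)"
proof -
  have s: "\<And>x. supin M x \<Longrightarrow> supin M (rel x)"
  proof -
    fix x :: "complex lc" assume a: "supin M x"
    show "supin M (rel x)" unfolding supin_def
    proof (intro allI impI)
      fix q assume "coef (rel x) q \<noteq> 0"
      then have "coef x q \<noteq> 0" by (auto simp: coef_rel)
      then show "q \<in> M" using a by (simp add: supin_def)
    qed
  qed
  show ?thesis using assms unfolding mconv_def
    by (auto simp: coef_rel intro: tendsto_Re s elim: eventually_mono)
qed

lemma mconv_iml:
  assumes "mconv M Z z" shows "mconv M (\<lambda>k. iml (Z k)) (iml z)"
proof -
  have s: "\<And>x. supin M x \<Longrightarrow> supin M (iml x)"
  proof -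
    fix x :: "complex lc" assume a: "supin M x"
    show "supin M (iml x)" unfolding supin_def
    proof (intro allI impI)
      fix q assume "coef (iml x) q \<noteq> 0"
      then have "coef x q \<noteq> 0" by (auto simp: coef_iml)
      then show "q \<in> M" using a by (simp add: supin_def)
    qed
  qed
  show ?thesis using assms unfolding mconv_def
    by (auto simp: coef_iml intro: tendsto_Im s elim: eventually_mono)
qed

definition sq :: "real lc \<Rightarrow> real lc" where
  "sq T = const (sqrt (coef T 0)) * ev (fps_binomial (1/2)) (const (inverse (coef T 0)) * T - 1)"

lemma cabs_sq:
  assumes "amf z" "coef z 0 \<noteq> 0"
  shows "cabs z = sq (tsq z)"
proof (rule cabs_unique)
  have Ta: "amf (tsq z)" and T0: "coef (tsq z) 0 = (cmod (coef z 0))\<^sup>2" using tsq_amf[OF assms(1)] by auto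
  have c: "coef (tsq z) 0 > 0" using T0 assms(2) by simp
  show "sq (tsq z) * sq (tsq z) = tsq z" unfolding sq_def by (rule sqrt_amf_exists(1)[OF Ta c])
  have "coef (sq (tsq z)) 0 > 0" unfolding sq_def sqrt_amf_coef0(1)[OF Ta c] using c by simp
  moreover have "amf (sq (tsq z))" unfolding sq_def by (rule sqrt_amf_coef0(2)[OF Ta c])
  ultimately have "pos (sq (tsq z))" by (intro pos_lead(1)[of _ 0]) (auto simp: amf_def)
  then show "nonneg (sq (tsq z))" by (simp add: nonneg_def)
qed

lemma mconv_cabs:
  assumes M: "mon M" and Z: "mconv M Z z" and z0: "coef z 0 \<noteq> 0"
  shows "mconv M (\<lambda>k. cabs (Z k)) (cabs z)"
proof -
  have sz: "supin M z" using Z by (simp add: mconv_def)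
  have amfz: "amf z" by (rule supin_amf[OF M sz])
  have R: "mconv M (\<lambda>k. rel (Z k)) (rel z)" by (rule mconv_rel[OF Z])
  have I: "mconv M (\<lambda>k. iml (Z k)) (iml z)" by (rule mconv_iml[OF Z])
  have T: "mconv M (\<lambda>k. tsq (Z k)) (tsq z)"
    unfolding tsq_def by (rule mconv_add[OF mconv_mult[OF M R R] mconv_mult[OF M I I]])
  have Ta: "amf (tsq z)" and T0: "coef (tsq z) 0 = (cmod (coef z 0))\<^sup>2" using tsq_amf[OF amfz] by auto
  have c: "coef (tsq z) 0 > 0" using T0 z0 by simp
  have ev: "eventually (\<lambda>k. coef (Z k) 0 \<noteq> 0 \<and> supin M (Z k) \<and> supin M (tsq (Z k))) sequentially"
  proof -
    have e1: "eventually (\<lambda>k. coef (Z k) 0 \<noteq> 0) sequentially" by (rule mconv_coef0_ev[OF Z z0])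
    have e2: "eventually (\<lambda>k. supin M (Z k)) sequentially" using Z by (simp add: mconv_def)
    have e3: "eventually (\<lambda>k. supin M (tsq (Z k))) sequentially" using T by (simp add: mconv_def)
    show ?thesis using eventually_conj[OF e1 eventually_conj[OF e2 e3]] by simp
  qed
  have cT: "((\<lambda>k. coef (tsq (Z k)) 0) \<longlongrightarrow> coef (tsq z) 0) sequentially" using T by (simp add: mconv_def)
  have A: "mconv M (\<lambda>k. const (inverse (coef (tsq (Z k)) 0))) (const (inverse (coef (tsq z) 0)))"
    by (rule mconv_const[OF M tendsto_inverse[OF cT]]) (use c in simp)
  have B: "mconv M (\<lambda>k. const (sqrt (coef (tsq (Z k)) 0))) (const (sqrt (coef (tsq z) 0)))"
    by (rule mconv_const[OF M tendsto_real_sqrt[OF cT]])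
  have E: "mconv M (\<lambda>k. const (inverse (coef (tsq (Z k)) 0)) * tsq (Z k) - 1) (const (inverse (coef (tsq z) 0)) * tsq z - 1)"
    by (rule mconv_diff[OF mconv_mult[OF M A T] mconv_constseq[OF supin_1[OF M]]])
  have sE: "eventually (\<lambda>k. small (const (inverse (coef (tsq (Z k)) 0)) * tsq (Z k) - 1)) sequentially"
    using ev
  proof (rule eventually_mono)
    fix k assume k: "coef (Z k) 0 \<noteq> 0 \<and> supin M (Z k) \<and> supin M (tsq (Z k))"
    have "amf (Z k)" using k supin_amf[OF M] by blast
    then have "amf (tsq (Z k)) \<and> coef (tsq (Z k)) 0 = (cmod (coef (Z k) 0))\<^sup>2" by (rule tsq_amf)
    then have "amf (tsq (Z k))" "coef (tsq (Z k)) 0 > 0" using k by auto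
    then show "small (const (inverse (coef (tsq (Z k)) 0)) * tsq (Z k) - 1)" by (rule sqrt_amf_exists(2))
  qed
  have "mconv M (\<lambda>k. sq (tsq (Z k))) (sq (tsq z))"
    unfolding sq_def by (rule mconv_mult[OF M B mconv_ev[OF M E sE sqrt_amf_exists(2)[OF Ta c]]])
  then have "mconv M (\<lambda>k. sq (tsq (Z k))) (cabs z)" by (simp add: cabs_sq[OF amfz z0])
  moreover have "eventually (\<lambda>k. sq (tsq (Z k)) = cabs (Z k)) sequentially"
    using ev by (rule eventually_mono) (simp add: cabs_sq supin_amf[OF M])
  ultimately show ?thesis by (rule mconv_cong)
qed

lemma mconv_wk:
  fixes X :: "nat \<Rightarrow> complex lc"
  assumes M: "mon M" and X: "mconv M X L"
  shows "lc_wk_conv (\<lambda>k. coef (X k)) (coef L)"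
  unfolding lc_wk_conv_def
proof (intro allI impI)
  fix r :: real assume r: "0 < r"
  define R :: rat where "R = of_int \<lceil>1 / r\<rceil>"
  define F where "F = {q\<in>M. q \<le> R}"
  have finF: "finite F" using M unfolding F_def mon_def by blast
  have sL: "supin M L" using X by (simp add: mconv_def)
  have "eventually (\<lambda>k. \<forall>q\<in>F. dist (coef (X k) q) (coef L q) < r / 2) sequentially"
    using finF
  proof (rule eventually_ball_finite, intro ballI)
    fix q assume "q \<in> F"
    have "((\<lambda>k. coef (X k) q) \<longlongrightarrow> coef L q) sequentially" using X by (simp add: mconv_def)
    then show "eventually (\<lambda>k. dist (coef (X k) q) (coef L q) < r / 2) sequentially"
      by (rule tendstoD) (use r in simp)
  qed
  moreover have "eventually (\<lambda>k. supin M (X k)) sequentially" using X by (simp add: mconv_def)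
  ultimately have "eventually (\<lambda>k. (\<forall>q\<in>F. dist (coef (X k) q) (coef L q) < r / 2) \<and> supin M (X k)) sequentially"
    by (rule eventually_conj)
  then obtain N0 where N0: "\<And>k. N0 \<le> k \<Longrightarrow> (\<forall>q\<in>F. dist (coef (X k) q) (coef L q) < r / 2) \<and> supin M (X k)"
    unfolding eventually_sequentially by blast
  have "\<forall>k>N0. lc_seminorm (\<lambda>q. coef (X k) q - coef L q) (1 / r) < r"
  proof (intro allI impI)
    fix k assume "N0 < k"
    then have k: "\<forall>q\<in>F. dist (coef (X k) q) (coef L q) < r / 2" "supin M (X k)" using N0 by auto
    have bound: "cmod (coef (X k) q - coef L q) \<le> r / 2" if q: "real_of_rat q \<le> 1 / r" for q
    proof (cases "q \<in> M")
      case True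
      have "real_of_rat q \<le> real_of_int \<lceil>1 / r\<rceil>" using q by linarith
      then have "q \<le> R" unfolding R_def by (metis of_rat_less_eq of_rat_of_int_eq)
      then have "q \<in> F" using True by (simp add: F_def)
      then show ?thesis using k(1) by (auto simp: dist_norm less_imp_le)
    next
      case False
      then have "coef (X k) q = 0" "coef L q = 0" using k(2) sL unfolding supin_def by blast+
      then show ?thesis using r by simp
    qed
    have "lc_seminorm (\<lambda>q. coef (X k) q - coef L q) (1 / r) \<le> r / 2"
      unfolding lc_seminorm_def
    proof (rule cSUP_least)
      have "(0::rat) \<in> {q. real_of_rat q \<le> 1 / r}" using r by simp
      then show "{q. real_of_rat q \<le> 1 / r} \<noteq> {}" by blast
    qed (use bound in auto)
    then show "lc_seminorm (\<lambda>q. coef (X k) q - coef L q) (1 / r) < r" using r by simp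
  qed
  then show "\<exists>N0. \<forall>k>N0. lc_seminorm (\<lambda>q. coef (X k) q - coef L q) (1 / r) < r" by blast
qed




section \<open>Powers of elements with small leading coefficient\<close>

lemma poly_geom_zero:
  fixes r :: real
  assumes "0 \<le> r" "r < 1"
  shows "(\<lambda>k. real k ^ m * r ^ k) \<longlonglongrightarrow> 0"
proof (cases "m = 0")
  case True
  then show ?thesis using LIMSEQ_power_zero[of r] assms by simp
next
  case False
  define s where "s = root m r"
  have s0: "0 \<le> s" and s1: "s < 1" using assms False by (auto simp: s_def)
  have sm: "s ^ m = r" using assms False by (simp add: s_def)
  have "(\<lambda>k. real k * s ^ k) \<longlonglongrightarrow> 0"
    using powser_times_n_limit_0[of s] s0 s1 by simp
  then have "(\<lambda>k. (real k * s ^ k) ^ m) \<longlonglongrightarrow> 0 ^ m" by (rule tendsto_power)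
  moreover have "(\<lambda>k. (real k * s ^ k) ^ m) = (\<lambda>k. real k ^ m * r ^ k)"
    by (simp add: fun_eq_iff power_mult_distrib sm[symmetric] power_mult[symmetric] mult.commute)
  ultimately show ?thesis using False by (simp add: power_0_left)
qed

lemma binom_geom_zero:
  fixes a :: complex
  assumes "cmod a < 1"
  shows "(\<lambda>k. of_nat (k choose m) * a ^ (k - m)) \<longlonglongrightarrow> 0"
proof (cases "a = 0")
  case True
  have "eventually (\<lambda>k. 0 = of_nat (k choose m) * a ^ (k - m)) sequentially"
    using eventually_gt_at_top[of m] by (rule eventually_mono) (simp add: True)
  then show ?thesis by (rule Lim_transform_eventually[OF tendsto_const])
next
  case False
  define r where "r = cmod a"
  have r0: "0 < r" and r1: "r < 1" using False assms by (auto simp: r_def)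
  have g: "(\<lambda>k. real k ^ m * r ^ k) \<longlonglongrightarrow> 0" using poly_geom_zero[of r m] r0 r1 by simp
  show ?thesis
  proof (rule tendsto_0_le[OF g, where K="inverse r ^ m"])
    show "eventually (\<lambda>k. norm (of_nat (k choose m) * a ^ (k - m)) \<le> norm (real k ^ m * r ^ k) * inverse r ^ m) sequentially"
      using eventually_ge_at_top[of m]
    proof (rule eventually_mono)
      fix k assume k: "m \<le> k"
      have "norm (of_nat (k choose m) * a ^ (k - m)) = real (k choose m) * r ^ (k - m)"
        by (simp add: norm_mult norm_power r_def)
      also have "\<dots> \<le> real k ^ m * r ^ (k - m)"
        using binomial_le_pow[OF k] r0 by (intro mult_right_mono) (simp_all add: of_nat_le_iff[symmetric])
      also have "r ^ (k - m) = r ^ k * inverse r ^ m"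
        using k r0 by (simp add: power_diff power_inverse divide_inverse)
      finally show "norm (of_nat (k choose m) * a ^ (k - m)) \<le> norm (real k ^ m * r ^ k) * inverse r ^ m"
        using r0 by (simp add: mult_ac)
    qed
  qed
qed

lemma const_power: "const a ^ j = const (a ^ j)"
  by (induction j) (simp_all add: const_one const_mult)

lemma const_of_nat: "(of_nat c :: 'a::comm_ring_1 lc) = const (of_nat c)"
  by (induction c) (simp_all add: const_zero const_one const_add)

lemma rho_pow_zero:
  fixes rho :: "complex lc"
  assumes M: "mon M" and s: "supin M rho" and a1: "cmod (coef rho 0) < 1"
  shows "mconv M (\<lambda>k. rho ^ k) 0"
proof -
  define a where "a = coef rho 0"
  define eta where "eta = rho - const a"
  have seta: "supin M eta" unfolding eta_def by (rule supin_diff[OF s supin_const[OF M]])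
  have smeta: "small eta" unfolding small_def eta_def
  proof (intro allI impI)
    fix q :: rat assume "q \<le> 0"
    then show "coef (rho - const a) q = 0"
      using supin_amf[OF M s] by (cases "q = 0") (auto simp: a_def coef_const amf_def)
  qed
  note bnd = small_supin_bound[OF M smeta seta]
  have expand: "coef (rho ^ k) q = (\<Sum>m\<le>k. of_nat (k choose m) * a ^ (k - m) * coef (eta ^ m) q)" for k q
  proof -
    have "rho ^ k = (eta + const a) ^ k" by (simp add: eta_def)
    also have "\<dots> = (\<Sum>m\<le>k. of_nat (k choose m) * eta ^ m * const a ^ (k - m))" by (rule binomial_ring)
    also have "\<dots> = (\<Sum>m\<le>k. const (of_nat (k choose m) * a ^ (k - m)) * eta ^ m)"
      by (simp add: const_power const_of_nat const_mult mult_ac)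
    finally show ?thesis by (simp add: coef_sum coef_const_mult)
  qed
  have conv: "((\<lambda>k. coef (rho ^ k) q) \<longlongrightarrow> 0) sequentially" for q
  proof -
    define N where "N = nat \<lfloor>q / dM M\<rfloor>"
    have hq: "q < of_nat (Suc N) * dM M" unfolding N_def by (rule floor_bound[OF dM_pos[OF M]])
    have "((\<lambda>k. \<Sum>m\<le>N. of_nat (k choose m) * a ^ (k - m) * coef (eta ^ m) q) \<longlongrightarrow> (\<Sum>m\<le>N. 0 * coef (eta ^ m) q)) sequentially"
      using a1 unfolding a_def by (intro tendsto_sum tendsto_mult binom_geom_zero tendsto_const)
    then have t: "((\<lambda>k. \<Sum>m\<le>N. of_nat (k choose m) * a ^ (k - m) * coef (eta ^ m) q) \<longlongrightarrow> 0) sequentially" by simp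
    have "eventually (\<lambda>k. (\<Sum>m\<le>N. of_nat (k choose m) * a ^ (k - m) * coef (eta ^ m) q) = coef (rho ^ k) q) sequentially"
      using eventually_ge_at_top[of N]
    proof (rule eventually_mono)
      fix k assume k: "N \<le> k"
      have "(\<Sum>m\<le>k. of_nat (k choose m) * a ^ (k - m) * coef (eta ^ m) q) = (\<Sum>m\<le>N. of_nat (k choose m) * a ^ (k - m) * coef (eta ^ m) q)"
      proof (rule sum.mono_neutral_right)
        show "\<forall>i\<in>{..k} - {..N}. of_nat (k choose i) * a ^ (k - i) * coef (eta ^ i) q = 0"
        proof
          fix i assume "i \<in> {..k} - {..N}"
          then have "Suc N \<le> i" by auto
          then have "of_nat (Suc N) * dM M \<le> of_nat i * dM M" using dM_pos[OF M]
            by (intro mult_right_mono) auto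
          then have "q < of_nat i * dM M" using hq by linarith
          then have "coef (eta ^ i) q = 0" by (rule pow_zero_below'[OF bnd])
          then show "of_nat (k choose i) * a ^ (k - i) * coef (eta ^ i) q = 0" by simp
        qed
      qed (use k in auto)
      then show "(\<Sum>m\<le>N. of_nat (k choose m) * a ^ (k - m) * coef (eta ^ m) q) = coef (rho ^ k) q"
        by (simp add: expand)
    qed
    then show ?thesis by (rule Lim_transform_eventually[OF t])
  qed
  show ?thesis unfolding mconv_def using conv supin_power[OF M s] by (simp add: supin_0)
qed

inductive_set gen :: "rat set \<Rightarrow> rat set" for S where
  gen0: "0 \<in> gen S"
| genS: "s \<in> S \<Longrightarrow> 0 < s \<Longrightarrow> m \<in> gen S \<Longrightarrow> s + m \<in> gen S"

lemma gen_add: "a \<in> gen S \<Longrightarrow> b \<in> gen S \<Longrightarrow> a + b \<in> gen S"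
proof (induction a rule: gen.induct)
  case gen0 then show ?case by simp
next
  case (genS s m)
  then have "s + (m + b) \<in> gen S" by (rule_tac gen.genS) auto
  then show ?case by (simp add: add.assoc)
qed

lemma gen_nonneg: "a \<in> gen S \<Longrightarrow> 0 \<le> a"
  by (induction a rule: gen.induct) auto

lemma gen_S: "s \<in> S \<Longrightarrow> 0 \<le> s \<Longrightarrow> s \<in> gen S"
proof (cases "s = 0")
  case True then show ?thesis by (simp add: gen.gen0)
next
  case False
  assume "s \<in> S" "0 \<le> s"
  then have "s + 0 \<in> gen S" using False by (intro gen.genS gen.gen0) auto
  then show ?thesis by simp
qed

lemma mon_gen:
  assumes fin: "\<And>r. finite {s\<in>S. s \<le> r}"
  shows "mon (gen S)"
proof -
  define d where "d = Min (insert 1 {s\<in>S. 0 < s \<and> s < 1})"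
  have fd: "finite {s\<in>S. 0 < s \<and> s < 1}" by (rule finite_subset[OF _ fin[of 1]]) auto
  have d0: "0 < d" unfolding d_def using fd by (subst Min_gr_iff) auto
  have dle: "d \<le> s" if "s \<in> S" "0 < s" for s
  proof (cases "s < 1")
    case True then show ?thesis unfolding d_def using fd that by (intro Min_le) auto
  next
    case False
    have "d \<le> 1" unfolding d_def using fd by (intro Min_le) auto
    then show ?thesis using False by simp
  qed
  have fk: "finite {q\<in>gen S. q \<le> of_nat k * d}" for k
  proof (induction k)
    case 0
    have "{q\<in>gen S. q \<le> of_nat 0 * d} \<subseteq> {0}" using gen_nonneg by fastforce
    then show ?case by (rule finite_subset) simp
  next
    case (Suc k)
    have "{q\<in>gen S. q \<le> of_nat (Suc k) * d} \<subseteq>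
          insert 0 ((\<lambda>(s, m). s + m) ` ({s\<in>S. s \<le> of_nat (Suc k) * d} \<times> {q\<in>gen S. q \<le> of_nat k * d}))"
    proof
      fix q assume "q \<in> {q\<in>gen S. q \<le> of_nat (Suc k) * d}"
      then have q: "q \<in> gen S" "q \<le> of_nat (Suc k) * d" by auto
      from q(1) show "q \<in> insert 0 ((\<lambda>(s, m). s + m) ` ({s\<in>S. s \<le> of_nat (Suc k) * d} \<times> {q\<in>gen S. q \<le> of_nat k * d}))"
      proof (cases rule: gen.cases)
        case gen0 then show ?thesis by simp
      next
        case (genS s m)
        have "d \<le> s" using dle genS by simp
        moreover have "0 \<le> m" using gen_nonneg genS by simp
        ultimately have "s \<le> of_nat (Suc k) * d" "m \<le> of_nat k * d" using q(2) genS
          by (simp_all add: algebra_simps)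
        then show ?thesis using genS by (intro insertI2 image_eqI[of _ _ "(s, m)"]) auto
      qed
    qed
    moreover have "finite (insert 0 ((\<lambda>(s, m). s + m) ` ({s\<in>S. s \<le> of_nat (Suc k) * d} \<times> {q\<in>gen S. q \<le> of_nat k * d})))"
      using fin Suc.IH by simp
    ultimately show ?case by (rule finite_subset)
  qed
  have "finite {q\<in>gen S. q \<le> r}" for r
  proof -
    obtain k :: nat where "r / d < of_nat k" using reals_Archimedean2 by blast
    then have "r \<le> of_nat k * d" using d0 by (simp add: divide_less_eq)
    then have "{q\<in>gen S. q \<le> r} \<subseteq> {q\<in>gen S. q \<le> of_nat k * d}" by auto
    then show ?thesis using fk[of k] by (rule finite_subset)
  qed
  then show ?thesis unfolding mon_def using gen_add gen_nonneg gen.gen0 by blast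
qed




lemma wk_cong:
  assumes "lc_wk_conv a l" "eventually (\<lambda>k. a k = b k) sequentially"
  shows "lc_wk_conv b l"
  unfolding lc_wk_conv_def
proof (intro allI impI)
  fix r :: real assume r: "0 < r"
  obtain N0 where N0: "\<forall>k>N0. lc_seminorm (\<lambda>q. a k q - l q) (1 / r) < r"
    using assms(1) r unfolding lc_wk_conv_def by blast
  obtain N1 where N1: "\<And>k. N1 \<le> k \<Longrightarrow> a k = b k" using assms(2) unfolding eventually_sequentially by blast
  have "\<forall>k>max N0 N1. lc_seminorm (\<lambda>q. b k q - l q) (1 / r) < r"
    using N0 N1 by (metis max.strict_boundedE less_imp_le)
  then show "\<exists>N0. \<forall>k>N0. lc_seminorm (\<lambda>q. b k q - l q) (1 / r) < r" by blast
qed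

lemma coef_inverse0:
  fixes u :: "'a::field lc"
  assumes "amf u" "coef u 0 \<noteq> 0"
  shows "coef (inverse u) 0 = inverse (coef u 0)"
proof -
  have "coef (u * iv u) 0 = 1" using iv_right[OF assms] by (simp add: coef_one)
  then have "coef u 0 * coef (iv u) 0 = 1" using coef_mult_0[OF assms(1) iv_amf[OF assms]] by simp
  then show ?thesis using inverse_amf[OF assms] assms(2) by (simp add: field_simps)
qed

lemma supin_inverse:
  fixes u :: "'a::field lc"
  assumes M: "mon M" and s: "supin M u" and u0: "coef u 0 \<noteq> 0"
  shows "supin M (inverse u)"
proof -
  have a: "amf u" by (rule supin_amf[OF M s])
  have se: "supin M (1 - const (inverse (coef u 0)) * u)"
    by (rule supin_diff[OF supin_1[OF M] supin_mult[OF M supin_const[OF M] s]])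
  show ?thesis unfolding inverse_amf[OF a u0] iv_def
    by (rule supin_mult[OF M supin_const[OF M] supin_ev[OF M iv_small[OF a u0] se]])
qed

lemma nonneg_one: "nonneg 1"
proof -
  have "pos (1 :: real lc)" by (rule pos_lead(1)[of _ 0]) (simp_all add: coef_one)
  then show ?thesis by (simp add: nonneg_def)
qed

lemma nonneg_power: "nonneg x \<Longrightarrow> nonneg (x ^ k)"
proof (induction k)
  case 0 then show ?case by (simp add: nonneg_one)
next
  case (Suc k) then show ?case by (simp add: nonneg_mult)
qed




theorem mainTheorem9:
  fixes n :: nat
    and A :: "nat \<Rightarrow> nat \<Rightarrow> rat \<Rightarrow> complex"
    and \<nu> :: "nat \<Rightarrow> rat \<Rightarrow> real"
    and x :: "nat \<Rightarrow> rat \<Rightarrow> complex"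
    and w :: "nat \<Rightarrow> nat \<Rightarrow> rat \<Rightarrow> complex"
  assumes n_pos: "0 < n"
    and A_mat: "lc_mat n A"
    and nu_lf: "\<forall>j<n. lc_left_finite (\<nu> j)"
    and diag: "lc_diagonalizable_with n A (\<lambda>j. lcc_of_lcr (\<nu> j))"
    and nu_fin: "\<forall>j<n. lc_at_most_finite (\<nu> j)"
    and nu1: "\<nu> 0 0 = 1"
    and nu_lt: "\<forall>j. 1 \<le> j \<and> j < n \<longrightarrow> \<bar>\<nu> j 0\<bar> < 1"
    and nu_mono: "\<forall>j. 1 \<le> j \<and> j + 1 < n \<longrightarrow> \<bar>\<nu> (j + 1) 0\<bar> \<le> \<bar>\<nu> j 0\<bar>"
    and x_vec: "lc_vec n x"
    and w_vec: "\<forall>j<n. lc_vec n (w j)"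
    and x_sum: "\<forall>i<n. x i = (\<lambda>q. \<Sum>j<n. w j i q)"
    and w_eig: "\<forall>j<n. \<forall>i<n. lc_matvec n A (w j) i = lc_mult (lcc_of_lcr (\<nu> j)) (w j i)"
    and w_fin: "\<forall>j<n. \<forall>i<n. lc_at_most_finite (w j i)"
    and w1_nz: "\<exists>i<n. w 0 i 0 \<noteq> 0"
    and w1_unique: "\<exists>!i0. i0 < n \<and> cmod (w 0 i0 0) = (MAX i\<in>{..<n}. cmod (w 0 i 0))"
  shows "lc_vec_wk_conv n (\<lambda>k. lc_normalize n ((lc_matvec n A ^^ k) x)) (lc_normalize n (w 0))"
proof -
  define NU where "NU j = Abs_lc (\<nu> j)" for j
  define N where "N j = cc (NU j)" for j
  define W where "W j i = Abs_lc (w j i)" for j i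
  define AA where "AA i l = Abs_lc (A i l)" for i l
  have cNU: "coef (NU j) = \<nu> j" if "j < n" for j using nu_lf that by (simp add: NU_def coef_Abs)
  have cW: "coef (W j i) = w j i" if "j < n" "i < n" for j i
    using w_vec that by (simp add: W_def coef_Abs lc_vec_def)
  have cA: "coef (AA i l) = A i l" if "i < n" "l < n" for i l
    using A_mat that by (simp add: AA_def coef_Abs lc_mat_def)
  have cN: "coef (N j) = lcc_of_lcr (\<nu> j)" if "j < n" for j
    using that by (simp add: N_def lcc_of_lcr_coef[symmetric] cNU)
  have eig: "(\<Sum>l<n. AA i l * W j l) = N j * W j i" if j: "j < n" and i: "i < n" for j i
  proof -
    have "coef (\<Sum>l<n. AA i l * W j l) q = lc_matvec n A (w j) i q" for q
    proof -
      have "coef (\<Sum>l<n. AA i l * W j l) q = (\<Sum>l<n. lc_mult (A i l) (w j l) q)"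
        unfolding coef_sum by (rule sum.cong) (simp_all add: coef_mult cA cW i j)
      then show ?thesis by (simp add: lc_matvec_def)
    qed
    also have "lc_matvec n A (w j) i q = lc_mult (lcc_of_lcr (\<nu> j)) (w j i) q" for q
      using w_eig j i by simp
    also have "lc_mult (lcc_of_lcr (\<nu> j)) (w j i) q = coef (N j * W j i) q" for q
      by (simp add: coef_mult cN cW i j)
    finally show ?thesis by (intro lc_eqI) simp
  qed
  define Y where "Y k i = (\<Sum>j<n. N j ^ k * W j i)" for k i
  have iter: "(lc_matvec n A ^^ k) x i = coef (Y k i)" if "i < n" for k i
    using that
  proof (induction k arbitrary: i)
    case 0
    have "x i = (\<lambda>q. \<Sum>j<n. w j i q)" using x_sum 0 by simp
    also have "\<dots> = coef (Y 0 i)"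
    proof
      fix q show "(\<Sum>j<n. w j i q) = coef (Y 0 i) q"
        unfolding Y_def coef_sum by (rule sum.cong) (simp_all add: cW 0)
    qed
    finally show ?case by simp
  next
    case (Suc k)
    have "(lc_matvec n A ^^ Suc k) x i = lc_matvec n A ((lc_matvec n A ^^ k) x) i" by simp
    also have "\<dots> = coef (\<Sum>l<n. AA i l * Y k l)"
    proof
      fix q
      have "coef (\<Sum>l<n. AA i l * Y k l) q = (\<Sum>l<n. lc_mult (A i l) ((lc_matvec n A ^^ k) x l) q)"
        unfolding coef_sum by (rule sum.cong) (simp_all add: coef_mult cA Suc)
      then show "lc_matvec n A ((lc_matvec n A ^^ k) x) i q = coef (\<Sum>l<n. AA i l * Y k l) q"
        by (simp add: lc_matvec_def)
    qed
    also have "(\<Sum>l<n. AA i l * Y k l) = (\<Sum>l<n. \<Sum>j<n. AA i l * (N j ^ k * W j l))"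
      unfolding Y_def by (simp add: sum_distrib_left)
    also have "\<dots> = (\<Sum>j<n. \<Sum>l<n. AA i l * (N j ^ k * W j l))" by (rule sum.swap)
    also have "\<dots> = (\<Sum>j<n. N j ^ k * (\<Sum>l<n. AA i l * W j l))"
      by (simp add: sum_distrib_left mult.left_commute)
    also have "\<dots> = (\<Sum>j<n. N j ^ k * (N j * W j i))"
      by (rule sum.cong) (simp_all add: eig Suc)
    also have "\<dots> = Y (Suc k) i" unfolding Y_def by (simp add: mult_ac)
    finally show ?case .
  qed
  define S where "S = {q. \<exists>j<n. \<nu> j q \<noteq> 0} \<union> {q. \<exists>j<n. \<exists>i<n. w j i q \<noteq> 0}"
  have Sfin: "finite {s\<in>S. s \<le> r}" for r
  proof -
    have "{s\<in>S. s \<le> r} \<subseteq> (\<Union>j<n. {q. q \<le> r \<and> \<nu> j q \<noteq> 0}) \<union> (\<Union>j<n. \<Union>i<n. {q. q \<le> r \<and> w j i q \<noteq> 0})"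
      unfolding S_def by blast
    moreover have "finite ((\<Union>j<n. {q. q \<le> r \<and> \<nu> j q \<noteq> 0}) \<union> (\<Union>j<n. \<Union>i<n. {q. q \<le> r \<and> w j i q \<noteq> 0}))"
      using nu_lf w_vec by (auto intro!: lf_le_finite simp: lc_vec_def)
    ultimately show ?thesis by (rule finite_subset)
  qed
  have Snn: "0 \<le> s" if "s \<in> S" for s
  proof (rule ccontr)
    assume "\<not> 0 \<le> s"
    then have "s < 0" by simp
    then show False using that nu_fin w_fin unfolding S_def lc_at_most_finite_def by blast
  qed
  define M where "M = gen S"
  have M: "mon M" unfolding M_def by (rule mon_gen[OF Sfin])
  have SM: "s \<in> M" if "s \<in> S" for s unfolding M_def by (rule gen_S[OF that Snn[OF that]])
  have sNU: "supin M (NU j)" if "j < n" for j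
    unfolding supin_def using that by (auto simp: cNU S_def intro!: SM)
  have sN: "supin M (N j)" if "j < n" for j
    using sNU[OF that] by (simp add: supin_def N_def coef_cc)
  have sW: "supin M (W j i)" if "j < n" "i < n" for j i
    unfolding supin_def using that by (auto simp: cW S_def intro!: SM)
  have amfN: "amf (N j)" if "j < n" for j by (rule supin_amf[OF M sN[OF that]])
  have n0: "0 < n" by (rule n_pos)
  have N00: "coef (N 0) 0 = 1" using cN[OF n0] nu1 by (simp add: lcc_of_lcr_def)
  have NU00: "coef (NU 0) 0 = 1" using cNU[OF n0] nu1 by simp
  have NU0nn: "nonneg (NU 0)"
  proof -
    have "pos (NU 0)"
      by (rule pos_lead(1)[of _ 0]) (use NU00 nu_fin n0 cNU[OF n0] in \<open>auto simp: lc_at_most_finite_def\<close>)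
    then show ?thesis by (simp add: nonneg_def)
  qed
  have N0nz: "N 0 \<noteq> 0" using N00 by auto
  define IN where "IN = inverse (N 0)"
  have sIN: "supin M IN" unfolding IN_def by (rule supin_inverse[OF M sN[OF n0]]) (simp add: N00)
  have cIN: "coef IN 0 = 1" unfolding IN_def using coef_inverse0[OF amfN[OF n0]] N00 by simp
  define rho where "rho j = N j * IN" for j
  have srho: "supin M (rho j)" if "j < n" for j unfolding rho_def by (rule supin_mult[OF M sN[OF that] sIN])
  have rho_conv: "mconv M (\<lambda>k. rho j ^ k) 0" if "1 \<le> j" "j < n" for j
  proof (rule rho_pow_zero[OF M srho[OF that(2)]])
    have "coef (rho j) 0 = coef (N j) 0 * coef IN 0"
      unfolding rho_def by (rule coef_mult_0[OF amfN[OF that(2)] supin_amf[OF M sIN]])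
    also have "\<dots> = complex_of_real (\<nu> j 0)" using cN[OF that(2)] cIN by (simp add: lcc_of_lcr_def)
    finally show "cmod (coef (rho j) 0) < 1" using nu_lt that by simp
  qed
  have NjRho: "N j = rho j * N 0" for j
    unfolding rho_def IN_def using N0nz by (simp add: mult.assoc)
  define Z where "Z i k = W 0 i + (\<Sum>j\<in>{1..<n}. rho j ^ k * W j i)" for i k
  have YZ: "Y k i = N 0 ^ k * Z i k" for k i
  proof -
    have "{..<n} = insert 0 {1..<n}" using n0 by auto
    then have "Y k i = N 0 ^ k * W 0 i + (\<Sum>j\<in>{1..<n}. N j ^ k * W j i)" unfolding Y_def by simp
    also have "(\<Sum>j\<in>{1..<n}. N j ^ k * W j i) = N 0 ^ k * (\<Sum>j\<in>{1..<n}. rho j ^ k * W j i)"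
      unfolding sum_distrib_left
    proof (rule sum.cong[OF refl])
      fix j
      have "N j ^ k = (rho j * N 0) ^ k" by (subst NjRho[of j]) (rule refl)
      then show "N j ^ k * W j i = N 0 ^ k * (rho j ^ k * W j i)" by (simp add: power_mult_distrib mult_ac)
    qed
    finally show ?thesis unfolding Z_def by (simp add: distrib_left)
  qed
  have sZ: "supin M (Z i k)" if "i < n" for i k
    unfolding Z_def using that
    by (intro supin_add sW supin_sum supin_mult[OF M] supin_power[OF M] srho) auto
  have amfZ: "amf (Z i k)" if "i < n" for i k by (rule supin_amf[OF M sZ[OF that]])
  have Zconv: "mconv M (Z i) (W 0 i)" if i: "i < n" for i
  proof -
    have "mconv M (\<lambda>k. \<Sum>j\<in>{1..<n}. rho j ^ k * W j i) (\<Sum>j\<in>{1..<n}. 0 * W j i)"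
    proof (rule mconv_sum[OF M])
      fix j assume "j \<in> {1..<n}"
      then have j: "1 \<le> j" "j < n" by auto
      show "mconv M (\<lambda>k. rho j ^ k * W j i) (0 * W j i)"
        by (rule mconv_mult[OF M rho_conv[OF j] mconv_constseq[OF sW[OF j(2) i]]])
    qed
    then have "mconv M (\<lambda>k. W 0 i + (\<Sum>j\<in>{1..<n}. rho j ^ k * W j i)) (W 0 i + (\<Sum>j\<in>{1..<n}. 0 * W j i))"
      by (rule mconv_add[OF mconv_constseq[OF sW[OF n0 i]]])
    moreover have "Z i = (\<lambda>k. W 0 i + (\<Sum>j\<in>{1..<n}. rho j ^ k * W j i))" by (simp add: Z_def fun_eq_iff)
    ultimately show ?thesis by simp
  qed
  obtain i0 where i0: "i0 < n" "cmod (w 0 i0 0) = (MAX i\<in>{..<n}. cmod (w 0 i 0))"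
    and uniq: "\<And>i. i < n \<Longrightarrow> cmod (w 0 i 0) = (MAX i\<in>{..<n}. cmod (w 0 i 0)) \<Longrightarrow> i = i0"
    using w1_unique by blast
  have maxle: "cmod (w 0 i 0) \<le> (MAX i\<in>{..<n}. cmod (w 0 i 0))" if "i < n" for i
    using that by (intro Max_ge) auto
  have lt: "cmod (w 0 i 0) < cmod (w 0 i0 0)" if "i < n" "i \<noteq> i0" for i
    using maxle[OF that(1)] uniq[OF that(1)] that(2) i0(2) by fastforce
  have c0: "w 0 i0 0 \<noteq> 0"
  proof -
    obtain i1 where "i1 < n" "w 0 i1 0 \<noteq> 0" using w1_nz by blast
    then have "0 < cmod (w 0 i1 0)" by simp
    also have "\<dots> \<le> cmod (w 0 i0 0)" using maxle[OF \<open>i1 < n\<close>] i0(2) by simp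
    finally show ?thesis by simp
  qed
  have cW0: "coef (W 0 i) 0 = w 0 i 0" if "i < n" for i using cW[OF n0 that] by simp
  have evlt: "eventually (\<lambda>k. \<forall>i\<in>{..<n}. i \<noteq> i0 \<longrightarrow> cmod (coef (Z i k) 0) < cmod (coef (Z i0 k) 0)) sequentially"
  proof (rule eventually_ball_finite)
    show "finite {..<n}" by simp
    show "\<forall>i\<in>{..<n}. eventually (\<lambda>k. i \<noteq> i0 \<longrightarrow> cmod (coef (Z i k) 0) < cmod (coef (Z i0 k) 0)) sequentially"
    proof
      fix i assume "i \<in> {..<n}"
      then have i: "i < n" by simp
      have t1: "((\<lambda>k. coef (Z i k) 0) \<longlongrightarrow> coef (W 0 i) 0) sequentially" using Zconv[OF i] by (simp add: mconv_def)
      have t2: "((\<lambda>k. coef (Z i0 k) 0) \<longlongrightarrow> coef (W 0 i0) 0) sequentially" using Zconv[OF i0(1)] by (simp add: mconv_def)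
      have t: "((\<lambda>k. cmod (coef (Z i0 k) 0) - cmod (coef (Z i k) 0)) \<longlongrightarrow> cmod (w 0 i0 0) - cmod (w 0 i 0)) sequentially"
        using tendsto_diff[OF tendsto_norm[OF t2] tendsto_norm[OF t1]] cW0[OF i] cW0[OF i0(1)] by simp
      show "eventually (\<lambda>k. i \<noteq> i0 \<longrightarrow> cmod (coef (Z i k) 0) < cmod (coef (Z i0 k) 0)) sequentially"
      proof (cases "i = i0")
        case True then show ?thesis by simp
      next
        case False
        have "eventually (\<lambda>k. 0 < cmod (coef (Z i0 k) 0) - cmod (coef (Z i k) 0)) sequentially"
          by (rule order_tendstoD(1)[OF t]) (use lt[OF i False] in simp)
        then show ?thesis by (rule eventually_mono) simp
      qed
    qed
  qed
  have evnz: "eventually (\<lambda>k. coef (Z i0 k) 0 \<noteq> 0) sequentially"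
    by (rule mconv_coef0_ev[OF Zconv[OF i0(1)]]) (simp add: cW0[OF i0(1)] c0)
  define F where "F k = (lc_matvec n A ^^ k) x" for k
  have Fi: "F k i = coef (Y k i)" if "i < n" for k i unfolding F_def by (rule iter[OF that])
  have amfN0k: "amf (N 0 ^ k)" for k by (rule amf_power[OF amfN[OF n0]])
  have amfY: "amf (Y k i)" if "i < n" for k i unfolding YZ by (rule amf_mult[OF amfN0k amfZ[OF that]])
  have coefY0: "coef (Y k i) 0 = coef (Z i k) 0" if "i < n" for k i
    unfolding YZ coef_mult_0[OF amfN0k amfZ[OF that]] coef_power_0[OF amfN[OF n0]] N00 by simp
  have normeq: "eventually (\<lambda>k. \<forall>i<n. lc_normalize n (F k) i = coef (Z i k * inverse (cc (cabs (Z i0 k))))) sequentially"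
    using eventually_conj[OF evlt evnz]
  proof (rule eventually_mono)
    fix k assume k: "(\<forall>i\<in>{..<n}. i \<noteq> i0 \<longrightarrow> cmod (coef (Z i k) 0) < cmod (coef (Z i0 k) 0)) \<and> coef (Z i0 k) 0 \<noteq> 0"
    have mn: "lc_maxnorm n (F k) = coef (cabs (Y k i0))"
      by (rule maxnorm_eq[OF i0(1) amfY]) (use k coefY0 i0(1) Fi in auto)
    have N0k: "N 0 ^ k = cc (NU 0 ^ k)" by (simp add: N_def cc_power)
    have cab: "cabs (Y k i0) = NU 0 ^ k * cabs (Z i0 k)"
      unfolding YZ N0k by (rule cabs_cc_mult[OF nonneg_power[OF NU0nn]])
    define D where "D = cc (NU 0 ^ k * cabs (Z i0 k))"
    have D: "D = N 0 ^ k * cc (cabs (Z i0 k))" unfolding D_def by (simp add: cc_mult N0k)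
    have cz: "cc (cabs (Z i0 k)) \<noteq> 0"
    proof
      assume "cc (cabs (Z i0 k)) = 0"
      then have "coef (cabs (Z i0 k)) 0 = 0" by (simp add: cc_eq0)
      then show False using cabs_amf(2)[OF amfZ[OF i0(1)]] k by simp
    qed
    have Dnz: "D \<noteq> 0" unfolding D using N0nz cz by simp
    have lm: "lcc_of_lcr (lc_maxnorm n (F k)) = coef D" by (simp add: mn cab lcc_of_lcr_coef D_def)
    show "\<forall>i<n. lc_normalize n (F k) i = coef (Z i k * inverse (cc (cabs (Z i0 k))))"
    proof (intro allI impI)
      fix i assume i: "i < n"
      have "lc_normalize n (F k) i = lc_mult (coef (Y k i)) (coef (inverse D))"
        by (simp add: lc_normalize_def lm lc_inverse_coef[OF Dnz] Fi[OF i])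
      also have "\<dots> = coef (Y k i * inverse D)" by (simp add: coef_mult)
      also have "Y k i * inverse D = Z i k * inverse (cc (cabs (Z i0 k)))"
        unfolding YZ D using N0nz cz by (simp add: field_simps)
      finally show "lc_normalize n (F k) i = coef (Z i k * inverse (cc (cabs (Z i0 k))))" .
    qed
  qed
  have amfW0: "amf (W 0 i)" if "i < n" for i by (rule supin_amf[OF M sW[OF n0 that]])
  have czW: "coef (cc (cabs (W 0 i0))) 0 \<noteq> 0"
    using cabs_amf(2)[OF amfW0[OF i0(1)]] cW0[OF i0(1)] c0 by (simp add: coef_cc)
  have czW': "cc (cabs (W 0 i0)) \<noteq> 0" using czW by auto
  have limeq: "lc_normalize n (w 0) i = coef (W 0 i * inverse (cc (cabs (W 0 i0))))" if i: "i < n" for i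
  proof -
    have mn: "lc_maxnorm n (w 0) = coef (cabs (W 0 i0))"
    proof (rule maxnorm_eq[OF i0(1) amfW0])
      fix i assume a: "i < n" "i \<noteq> i0"
      show "cmod (coef (W 0 i) 0) < cmod (coef (W 0 i0) 0)"
        using lt[OF a] cW0[OF a(1)] cW0[OF i0(1)] by simp
    next
      fix i assume a: "i < n"
      show "w 0 i = coef (W 0 i)" using cW[OF n0 a] by simp
    qed simp
    show ?thesis
      by (simp add: lc_normalize_def mn lcc_of_lcr_coef lc_inverse_coef[OF czW'] cW[OF n0 i] coef_mult)
  qed
  show ?thesis
    unfolding lc_vec_wk_conv_def
  proof (intro allI impI)
    fix i assume i: "i < n"
    have "mconv M (\<lambda>k. Z i k * inverse (cc (cabs (Z i0 k)))) (W 0 i * inverse (cc (cabs (W 0 i0))))"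
      by (rule mconv_mult[OF M Zconv[OF i] mconv_inverse[OF M mconv_cc[OF mconv_cabs[OF M Zconv[OF i0(1)]]] czW]])
        (simp add: cW0[OF i0(1)] c0)
    then have "lc_wk_conv (\<lambda>k. coef (Z i k * inverse (cc (cabs (Z i0 k))))) (coef (W 0 i * inverse (cc (cabs (W 0 i0)))))"
      by (rule mconv_wk[OF M])
    then have "lc_wk_conv (\<lambda>k. lc_normalize n (F k) i) (lc_normalize n (w 0) i)"
      unfolding limeq[OF i]
      by (rule wk_cong) (use normeq i in \<open>auto elim: eventually_mono\<close>)
    then show "lc_wk_conv (\<lambda>k. lc_normalize n ((lc_matvec n A ^^ k) x) i) (lc_normalize n (w 0) i)"
      by (simp add: F_def)
  qed
qed


end
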